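(* Let $\widetilde C$ be an $\mathcal S$-complex over $R$. Then the negative suspension $\Sigma^{-1}\widetilde C$ is $\mathcal S$-chain homotopy equivalent to $\widetilde C\otimes\widetilde{\mathcal O}(-1)$.
   Context: Let $R$ be a commutative ring. Graded modules are $\mathbb Z$-graded; $V[i]_j=V_{i+j}$; differentials have degree $-1$; $\epsilon$ is the sign map ($(-1)^i$ on degree $i$). An $\mathcal S$-complex over $R$ is a chain complex $(\widetilde C,\widetilde d)$ of finitely generated free graded $R$-modules with a graded decomposition $\widetilde C=C\oplus C[-1]\oplus\mathsf R$ in which $\widetilde d=\begin{pmatrix} d&0&0\\ v&-d&\delta_2\\ \delta_1&0&r\end{pmatrix}$. Let $\chi$ be the degree $1$ map sending $C$ identically onto $C[-1]$ and zero on $C[-1]\oplus\mathsf R$. A morphism is a degree $0$ chain map $\widetilde\lambda$ with $\chi'\widetilde\lambda=\widetilde\lambda\chi$; an $\mathcal S$-chain homotopy between morphisms is a degree $1$ map $\widetilde K$ with $\chi'\widetilde K+\widetilde K\chi=0$ and $\widetilde d'\widetilde K+\widetilde K\widetilde d$ equal to their difference; an $\mathcal S$-chain homotopy equivalence is a pair of morphisms whose composites are $\mathcal S$-chain homotopic to identities. The tensor product $\widetilde C\otimes\widetilde C'$ is the tensor product chain complex (differential $\widetilde d\otimes1+\epsilon\otimes\widetilde d'$) with $\chi^\otimes=\chi\otimes1+\epsilon\otimes\chi'$, an $\mathcal S$-complex with reducible summand $\mathsf R\otimes\mathsf R'$. The negative suspension $\Sigma^{-1}\widetilde C$ is the $\mathcal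 S$-complex $C_{\Sigma^{-1}}\oplus C_{\Sigma^{-1}}[-1]\oplus\mathsf R$ with $C_{\Sigma^{-1}}=C[2]\oplus\mathsf R[2]$ and, with respect to the ordered summands $C[2],\mathsf R[2],C[1],\mathsf R[1],\mathsf R$, differential $\widetilde d_{\Sigma^{-1}}=\begin{pmatrix} d&0&0&0&0\\ \delta_1&r&0&0&0\\ v&\delta_2&-d&0&0\\ 0&0&-\delta_1&-r&1\\ \delta_1v&\delta_1\delta_2&0&0&r\end{pmatrix}$ (the entry $1$ is the identity $\mathsf R\to\mathsf R[1]$). $\widetilde{\mathcal O}(-1)$ is the $\mathcal S$-complex with $C=R$ in degree $-2$, $\mathsf R=R$ in degree $0$, $d=v=\delta_1=r=0$ and $\delta_2:\mathsf R\to C$ the identity of $R$. *)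

theory Defs
  imports "Jordan_Normal_Form.Matrix"
begin

text \<open>Finitely generated free graded R-modules are represented by a homogeneous basis,
  i.e. by the list of degrees of the basis elements; graded maps are matrices with respect
  to these bases (column = source basis element, row = target basis element).
  Shift convention: V[i]_j = V_(i+j), so a basis element of degree n in V has degree n - i
  in V[i].\<close>

definition shift_degs :: "int \<Rightarrow> int list \<Rightarrow> int list" where
  "shift_degs i ds = map (\<lambda>n. n - i) ds"

definition graded_map :: "int list \<Rightarrow> int list \<Rightarrow> int \<Rightarrow> 'a::zero mat \<Rightarrow> bool" where
  "graded_map src tgt k M \<longleftrightarrow>
     M \<in> carrier_mat (length tgt) (length src) \<and>
     (\<forall>i < length tgt. \<forall>j < length src. M $$ (i, j) \<noteq> 0 \<longrightarrow> tgt ! i = src ! j + k)"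

record 'a cxchi =
  degs :: "int list"
  dif :: "'a mat"
  chi :: "'a mat"

definition row_blocks :: "'a::zero mat \<Rightarrow> 'a mat \<Rightarrow> 'a mat" where
  "row_blocks A B = four_block_mat A B (0\<^sub>m 0 (dim_col A)) (0\<^sub>m 0 (dim_col B))"

definition block3 :: "'a::zero mat \<Rightarrow> 'a mat \<Rightarrow> 'a mat \<Rightarrow> 'a mat \<Rightarrow> 'a mat \<Rightarrow> 'a mat
    \<Rightarrow> 'a mat \<Rightarrow> 'a mat \<Rightarrow> 'a mat \<Rightarrow> 'a mat" where
  "block3 A11 A12 A13 A21 A22 A23 A31 A32 A33 =
     four_block_mat (four_block_mat A11 A12 A21 A22) (A13 @\<^sub>r A23)
                    (row_blocks A31 A32) A33"

text \<open>The total complex C~ = C \<oplus> C[-1] \<oplus> R of S-complex data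
  (C has basis degrees dc, R has basis degrees dr).\<close>
definition S_tot :: "int list \<Rightarrow> int list \<Rightarrow> 'a::comm_ring_1 mat \<Rightarrow> 'a mat \<Rightarrow> 'a mat
    \<Rightarrow> 'a mat \<Rightarrow> 'a mat \<Rightarrow> 'a cxchi" where
  "S_tot dc dr d v \<delta>1 \<delta>2 r =
    (let nc = length dc; nr = length dr in
     \<lparr> degs = dc @ shift_degs (-1) dc @ dr,
       dif = block3 d (0\<^sub>m nc nc) (0\<^sub>m nc nr)
                    v (- d) \<delta>2
                    \<delta>1 (0\<^sub>m nr nc) r,
       chi = block3 (0\<^sub>m nc nc) (0\<^sub>m nc nc) (0\<^sub>m nc nr)
                    (1\<^sub>m nc) (0\<^sub>m nc nc) (0\<^sub>m nc nr)
                    (0\<^sub>m nr nc) (0\<^sub>m nr nc) (0\<^sub>m nr nr) \<rparr>)"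

definition is_S_complex :: "int list \<Rightarrow> int list \<Rightarrow> 'a::comm_ring_1 mat \<Rightarrow> 'a mat
    \<Rightarrow> 'a mat \<Rightarrow> 'a mat \<Rightarrow> 'a mat \<Rightarrow> bool" where
  "is_S_complex dc dr d v \<delta>1 \<delta>2 r \<longleftrightarrow>
     (let nc = length dc; nr = length dr; X = S_tot dc dr d v \<delta>1 \<delta>2 r in
      d \<in> carrier_mat nc nc \<and> v \<in> carrier_mat nc nc \<and> \<delta>2 \<in> carrier_mat nc nr \<and>
      \<delta>1 \<in> carrier_mat nr nc \<and> r \<in> carrier_mat nr nr \<and>
      graded_map (degs X) (degs X) (-1) (dif X) \<and> dif X * dif X = 0\<^sub>m (length (degs X)) (length (degs X)))"

text \<open>Negative suspension: the S-complex with C_Sigma = C[2] \<oplus> R[2], reducible part R,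
  and the displayed differential w.r.t. C[2], R[2], C[1], R[1], R.\<close>
definition neg_susp :: "int list \<Rightarrow> int list \<Rightarrow> 'a::comm_ring_1 mat \<Rightarrow> 'a mat \<Rightarrow> 'a mat
    \<Rightarrow> 'a mat \<Rightarrow> 'a mat \<Rightarrow> 'a cxchi" where
  "neg_susp dc dr d v \<delta>1 \<delta>2 r =
    (let nc = length dc; nr = length dr in
     S_tot (shift_degs 2 dc @ shift_degs 2 dr) dr
       (four_block_mat d (0\<^sub>m nc nr) \<delta>1 r)
       (four_block_mat v \<delta>2 (0\<^sub>m nr nc) (0\<^sub>m nr nr))
       (row_blocks (\<delta>1 * v) (\<delta>1 * \<delta>2))
       ((0\<^sub>m nc nr) @\<^sub>r (1\<^sub>m nr))
       r)"

definition O_minus1 :: "'a::comm_ring_1 cxchi" where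
  "O_minus1 = S_tot [-2] [0] (0\<^sub>m 1 1) (0\<^sub>m 1 1) (0\<^sub>m 1 1) (1\<^sub>m 1) (0\<^sub>m 1 1)"

definition kron :: "'a::comm_ring_1 mat \<Rightarrow> 'a mat \<Rightarrow> 'a mat" where
  "kron A B = mat (dim_row A * dim_row B) (dim_col A * dim_col B)
     (\<lambda>(i, j). A $$ (i div dim_row B, j div dim_col B) * B $$ (i mod dim_row B, j mod dim_col B))"

definition sign_mat :: "int list \<Rightarrow> 'a::comm_ring_1 mat" where
  "sign_mat ds = mat_diag (length ds) (\<lambda>i. if even (ds ! i) then 1 else -1)"

text \<open>Tensor product; basis element (i,j) has index i * n2 + j.\<close>
definition tensor_cx :: "'a::comm_ring_1 cxchi \<Rightarrow> 'a cxchi \<Rightarrow> 'a cxchi" where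
  "tensor_cx X Y =
    \<lparr> degs = concat (map (\<lambda>a. map (\<lambda>b. a + b) (degs Y)) (degs X)),
      dif = kron (dif X) (1\<^sub>m (length (degs Y))) + kron (sign_mat (degs X)) (dif Y),
      chi = kron (chi X) (1\<^sub>m (length (degs Y))) + kron (sign_mat (degs X)) (chi Y) \<rparr>"

definition S_morphism :: "'a::comm_ring_1 cxchi \<Rightarrow> 'a cxchi \<Rightarrow> 'a mat \<Rightarrow> bool" where
  "S_morphism X Y L \<longleftrightarrow>
     graded_map (degs X) (degs Y) 0 L \<and> dif Y * L = L * dif X \<and> chi Y * L = L * chi X"

definition S_homotopy :: "'a::comm_ring_1 cxchi \<Rightarrow> 'a cxchi \<Rightarrow> 'a mat \<Rightarrow> 'a mat \<Rightarrow> 'a mat \<Rightarrow> bool" where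
  "S_homotopy X Y L L' K \<longleftrightarrow>
     graded_map (degs X) (degs Y) 1 K \<and>
     chi Y * K + K * chi X = 0\<^sub>m (length (degs Y)) (length (degs X)) \<and>
     dif Y * K + K * dif X = L - L'"

definition S_htpy_equiv :: "'a::comm_ring_1 cxchi \<Rightarrow> 'a cxchi \<Rightarrow> bool" where
  "S_htpy_equiv X Y \<longleftrightarrow>
     (\<exists>F G. S_morphism X Y F \<and> S_morphism Y X G \<and>
        (\<exists>K. S_homotopy X X (G * F) (1\<^sub>m (length (degs X))) K) \<and>
        (\<exists>K. S_homotopy Y Y (F * G) (1\<^sub>m (length (degs Y))) K))"

end

theory Submission
  imports Defs
begin

definition offs :: "nat list \<Rightarrow> nat \<Rightarrow> nat" where
  "offs ns i = sum_list (take i ns)"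

lemma offs_0[simp]: "offs ns 0 = 0" by (simp add: offs_def)
lemma offs_Cons_Suc[simp]: "offs (n # ns) (Suc i) = n + offs ns i" by (simp add: offs_def)

lemma offs_bound: "i < length ns \<Longrightarrow> offs ns i + ns ! i \<le> sum_list ns"
proof (induction ns arbitrary: i)
  case Nil then show ?case by simp
next
  case (Cons n ns) then show ?case by (cases i) auto
qed

lemma offs_decomp: "p < sum_list ns \<Longrightarrow> \<exists>i<length ns. \<exists>x<ns!i. p = offs ns i + x"
proof (induction ns arbitrary: p)
  case Nil then show ?case by simp
next
  case (Cons n ns)
  show ?case
  proof (cases "p < n")
    case True then show ?thesis by (rule_tac x=0 in exI) auto
  next
    case False
    then have "p - n < sum_list ns" using Cons.prems by auto
    from Cons.IH[OF this] obtain i x where "i < length ns" "x < ns!i" "p - n = offs ns i + x" by blast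
    then show ?thesis using False by (rule_tac x="Suc i" in exI) auto
  qed
qed

lemma sum_offs: "(\<Sum>z<sum_list ks. g z) = (\<Sum>k<length ks. \<Sum>y<ks!k. g (offs ks k + y))"
proof (induction ks arbitrary: g)
  case Nil then show ?case by simp
next
  case (Cons a ks)
  have s: "(\<Sum>z<a + S. g z) = (\<Sum>z<a. g z) + (\<Sum>z<S. g (a + z))" for S
    by (induction S) (auto simp: add.assoc)
  show ?case
    by (simp add: s Cons.IH sum.lessThan_Suc_shift add.assoc del: sum.lessThan_Suc)
qed

lemma sum_stride: "(\<Sum>z<(m::nat) * c. g z) = (\<Sum>k<c. \<Sum>y<m. g (y * c + k))"
proof (induction m)
  case 0 then show ?case by simp
next
  case (Suc m)
  have s: "(\<Sum>z<S + c. g z) = (\<Sum>z<S. g z) + (\<Sum>k<c. g (S + k))" for S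
    by (induction c) (auto simp: add.assoc)
  have "(\<Sum>z<Suc m * c. g z) = (\<Sum>z<m * c + c. g z)" by (simp add: add.commute)
  also have "\<dots> = (\<Sum>k<c. \<Sum>y<m. g (y * c + k)) + (\<Sum>k<c. g (m * c + k))" by (simp add: s Suc.IH)
  also have "\<dots> = (\<Sum>k<c. \<Sum>y<Suc m. g (y * c + k))" by (simp add: sum.distrib)
  finally show ?case .
qed

fun dec :: "nat list \<Rightarrow> nat \<Rightarrow> nat \<times> nat" where
  "dec [] p = (0, p)"
| "dec (n # ns) p = (if p < n then (0, p) else (case dec ns (p - n) of (i, x) \<Rightarrow> (Suc i, x)))"

lemma dec_offs: "i < length ns \<Longrightarrow> x < ns ! i \<Longrightarrow> dec ns (offs ns i + x) = (i, x)"
proof (induction ns arbitrary: i)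
  case Nil then show ?case by simp
next
  case (Cons n ns) then show ?case by (cases i) auto
qed

fun msum :: "nat \<Rightarrow> (nat \<Rightarrow> 'a::monoid_add mat) \<Rightarrow> 'a mat" where
  "msum 0 f = f 0"
| "msum (Suc k) f = msum k f + f (Suc k)"

lemma msum_carrier: "(\<And>l. l \<le> k \<Longrightarrow> f l \<in> carrier_mat r c) \<Longrightarrow> msum k f \<in> carrier_mat r c"
  by (induction k) auto

lemma msum_index: "(\<And>l. l \<le> k \<Longrightarrow> f l \<in> carrier_mat r c) \<Longrightarrow> x < r \<Longrightarrow> y < c \<Longrightarrow>
   msum k f $$ (x, y) = (\<Sum>l<Suc k. f l $$ (x, y))"
proof (induction k)
  case 0 then show ?case by auto
next
  case (Suc k)
  have "f (Suc k) \<in> carrier_mat r c" using Suc.prems by auto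
  moreover have "msum k f \<in> carrier_mat r c" using Suc.prems by (intro msum_carrier) auto
  ultimately have "dim_row (f (Suc k)) = r" "dim_col (f (Suc k)) = c" by auto
  then show ?case using Suc by simp
qed

definition bsub :: "nat list \<Rightarrow> nat list \<Rightarrow> 'a mat \<Rightarrow> nat \<Rightarrow> nat \<Rightarrow> 'a mat" where
  "bsub ns ms M i j = mat (ns ! i) (ms ! j) (\<lambda>(x, y). M $$ (offs ns i + x, offs ms j + y))"

lemma bsub_carrier[simp]: "bsub ns ms M i j \<in> carrier_mat (ns ! i) (ms ! j)"
  and bsub_dims[simp]: "dim_row (bsub ns ms M i j) = ns ! i" "dim_col (bsub ns ms M i j) = ms ! j"
  by (auto simp: bsub_def)

lemma bsub_eq:
  assumes "M \<in> carrier_mat (sum_list ns) (sum_list ms)" "N \<in> carrier_mat (sum_list ns) (sum_list ms)"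
    and "\<And>i j. i < length ns \<Longrightarrow> j < length ms \<Longrightarrow> bsub ns ms M i j = bsub ns ms N i j"
  shows "M = N"
proof (rule eq_matI)
  fix p q assume "p < dim_row N" "q < dim_col N"
  then have pq: "p < sum_list ns" "q < sum_list ms" using assms by auto
  from offs_decomp[OF pq(1)] obtain i x where i: "i < length ns" "x < ns!i" "p = offs ns i + x" by blast
  from offs_decomp[OF pq(2)] obtain j y where j: "j < length ms" "y < ms!j" "q = offs ms j + y" by blast
  have "bsub ns ms M i j $$ (x, y) = bsub ns ms N i j $$ (x, y)" using assms(3)[OF i(1) j(1)] by simp
  then show "M $$ (p, q) = N $$ (p, q)" using i j by (simp add: bsub_def)
qed (use assms in auto)

lemma bsub_mult:
  assumes M: "M \<in> carrier_mat (sum_list ns) (sum_list ks)" and N: "N \<in> carrier_mat (sum_list ks) (sum_list ms)"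
    and i: "i < length ns" and j: "j < length ms" and k: "ks \<noteq> []"
  shows "bsub ns ms (M * N) i j = msum (length ks - 1) (\<lambda>l. bsub ns ks M i l * bsub ks ms N l j)"
proof -
  have car: "msum (length ks - 1) (\<lambda>l. bsub ns ks M i l * bsub ks ms N l j) \<in> carrier_mat (ns!i) (ms!j)"
    by (rule msum_carrier) auto
  show ?thesis
  proof (rule eq_matI)
  fix x y assume xy: "x < dim_row (msum (length ks - 1) (\<lambda>l. bsub ns ks M i l * bsub ks ms N l j))"
     "y < dim_col (msum (length ks - 1) (\<lambda>l. bsub ns ks M i l * bsub ks ms N l j))"
  then have x: "x < ns ! i" and y: "y < ms ! j" using car by auto
  have px: "offs ns i + x < sum_list ns" using offs_bound[OF i] x by linarith
  have qy: "offs ms j + y < sum_list ms" using offs_bound[OF j] y by linarith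
  have "bsub ns ms (M * N) i j $$ (x, y) = (\<Sum>z<sum_list ks. M $$ (offs ns i + x, z) * N $$ (z, offs ms j + y))"
    using M N x y px qy by (simp add: bsub_def scalar_prod_def row_def col_def atLeast0LessThan)
  also have "\<dots> = (\<Sum>l<length ks. \<Sum>w<ks!l. M $$ (offs ns i + x, offs ks l + w) * N $$ (offs ks l + w, offs ms j + y))"
    by (rule sum_offs)
  also have "\<dots> = (\<Sum>l<Suc (length ks - 1). (bsub ns ks M i l * bsub ks ms N l j) $$ (x, y))"
    using k x y by (simp add: bsub_def scalar_prod_def row_def col_def atLeast0LessThan)
  also have "\<dots> = msum (length ks - 1) (\<lambda>l. bsub ns ks M i l * bsub ks ms N l j) $$ (x, y)"
    by (rule msum_index[symmetric]) (use x y in auto)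
  finally show "bsub ns ms (M * N) i j $$ (x, y) = msum (length ks - 1) (\<lambda>l. bsub ns ks M i l * bsub ks ms N l j) $$ (x, y)" .
  qed (use car in auto)
qed



lemma offs_inj: assumes "i < length ns" "x < ns ! i" "j < length ns" "y < ns ! j" "offs ns i + x = offs ns j + y"
  shows "i = j \<and> x = y"
proof -
  have "dec ns (offs ns i + x) = dec ns (offs ns j + y)" using assms(5) by (rule arg_cong)
  then have "(i, x) = (j, y)" by (simp only: dec_offs[OF assms(1,2)] dec_offs[OF assms(3,4)])
  then show ?thesis by simp
qed

definition blk :: "nat list \<Rightarrow> nat list \<Rightarrow> (nat \<Rightarrow> nat \<Rightarrow> 'a mat) \<Rightarrow> 'a mat" where
  "blk ns ms B = mat (sum_list ns) (sum_list ms)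
     (\<lambda>(p, q). case dec ns p of (i, x) \<Rightarrow> case dec ms q of (j, y) \<Rightarrow> B i j $$ (x, y))"

lemma blk_carrier[simp]: "blk ns ms B \<in> carrier_mat (sum_list ns) (sum_list ms)"
  and blk_dims[simp]: "dim_row (blk ns ms B) = sum_list ns" "dim_col (blk ns ms B) = sum_list ms"
  by (auto simp: blk_def)

lemma bsub_blk: assumes "i < length ns" "j < length ms" "B i j \<in> carrier_mat (ns ! i) (ms ! j)"
  shows "bsub ns ms (blk ns ms B) i j = B i j"
proof (rule eq_matI)
  fix x y assume "x < dim_row (B i j)" "y < dim_col (B i j)"
  then have x: "x < ns ! i" and y: "y < ms ! j" using assms by auto
  have px: "offs ns i + x < sum_list ns" using offs_bound[OF assms(1)] x by linarith
  have qy: "offs ms j + y < sum_list ms" using offs_bound[OF assms(2)] y by linarith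
  show "bsub ns ms (blk ns ms B) i j $$ (x, y) = B i j $$ (x, y)"
    using px qy x y assms by (simp add: bsub_def blk_def dec_offs)
qed (use assms in auto)

lemma bsub_add: assumes "A \<in> carrier_mat (sum_list ns) (sum_list ms)" "B \<in> carrier_mat (sum_list ns) (sum_list ms)"
  "i < length ns" "j < length ms"
  shows "bsub ns ms (A + B) i j = bsub ns ms A i j + bsub ns ms B i j"
proof (rule eq_matI)
  fix x y assume "x < dim_row (bsub ns ms A i j + bsub ns ms B i j)" "y < dim_col (bsub ns ms A i j + bsub ns ms B i j)"
  then have x: "x < ns ! i" and y: "y < ms ! j" by auto
  have px: "offs ns i + x < sum_list ns" using offs_bound[OF assms(3)] x by linarith
  have qy: "offs ms j + y < sum_list ms" using offs_bound[OF assms(4)] y by linarith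
  show "bsub ns ms (A + B) i j $$ (x, y) = (bsub ns ms A i j + bsub ns ms B i j) $$ (x, y)"
    using px qy x y assms by (simp add: bsub_def)
qed auto

lemma bsub_uminus: assumes "A \<in> carrier_mat (sum_list ns) (sum_list ms)" "i < length ns" "j < length ms"
  shows "bsub ns ms (- A) i j = - bsub ns ms A i j"
proof (rule eq_matI)
  fix x y assume "x < dim_row (- bsub ns ms A i j)" "y < dim_col (- bsub ns ms A i j)"
  then have x: "x < ns ! i" and y: "y < ms ! j" by auto
  have px: "offs ns i + x < sum_list ns" using offs_bound[OF assms(2)] x by linarith
  have qy: "offs ms j + y < sum_list ms" using offs_bound[OF assms(3)] y by linarith
  show "bsub ns ms (- A) i j $$ (x, y) = (- bsub ns ms A i j) $$ (x, y)"
    using px qy x y assms by (simp add: bsub_def)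
qed auto

lemma bsub_minus: assumes "A \<in> carrier_mat (sum_list ns) (sum_list ms)" "B \<in> carrier_mat (sum_list ns) (sum_list ms)"
  "i < length ns" "j < length ms"
  shows "bsub ns ms (A - B) i j = bsub ns ms A i j - bsub ns ms B i j"
proof (rule eq_matI)
  fix x y assume "x < dim_row (bsub ns ms A i j - bsub ns ms B i j)" "y < dim_col (bsub ns ms A i j - bsub ns ms B i j)"
  then have x: "x < ns ! i" and y: "y < ms ! j" by auto
  have px: "offs ns i + x < sum_list ns" using offs_bound[OF assms(3)] x by linarith
  have qy: "offs ms j + y < sum_list ms" using offs_bound[OF assms(4)] y by linarith
  show "bsub ns ms (A - B) i j $$ (x, y) = (bsub ns ms A i j - bsub ns ms B i j) $$ (x, y)"
    using px qy x y assms by (simp add: bsub_def)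
qed auto

lemma bsub_zero: assumes "i < length ns" "j < length ms"
  shows "bsub ns ms (0\<^sub>m (sum_list ns) (sum_list ms)) i j = 0\<^sub>m (ns ! i) (ms ! j)"
proof (rule eq_matI)
  fix x y assume "x < dim_row (0\<^sub>m (ns ! i) (ms ! j) :: 'a mat)" "y < dim_col (0\<^sub>m (ns ! i) (ms ! j) :: 'a mat)"
  then have x: "x < ns ! i" and y: "y < ms ! j" by auto
  have px: "offs ns i + x < sum_list ns" using offs_bound[OF assms(1)] x by linarith
  have qy: "offs ms j + y < sum_list ms" using offs_bound[OF assms(2)] y by linarith
  show "bsub ns ms (0\<^sub>m (sum_list ns) (sum_list ms)) i j $$ (x, y) = (0\<^sub>m (ns ! i) (ms ! j) :: 'a mat) $$ (x, y)"
    using px qy x y assms by (simp add: bsub_def)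
qed auto

lemma bsub_one: assumes "i < length ns" "j < length ns"
  shows "bsub ns ns (1\<^sub>m (sum_list ns)) i j = (if i = j then 1\<^sub>m (ns ! i) else 0\<^sub>m (ns ! i) (ns ! j))"
proof (rule eq_matI)
  fix x y assume "x < dim_row (if i = j then 1\<^sub>m (ns ! i) else 0\<^sub>m (ns ! i) (ns ! j) :: 'a mat)"
     "y < dim_col (if i = j then 1\<^sub>m (ns ! i) else 0\<^sub>m (ns ! i) (ns ! j) :: 'a mat)"
  then have x: "x < ns ! i" and y: "y < ns ! j" by (auto split: if_splits)
  have px: "offs ns i + x < sum_list ns" using offs_bound[OF assms(1)] x by linarith
  have qy: "offs ns j + y < sum_list ns" using offs_bound[OF assms(2)] y by linarith
  have "(offs ns i + x = offs ns j + y) = (i = j \<and> x = y)" using offs_inj[OF assms(1) x assms(2) y] by auto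
  then show "bsub ns ns (1\<^sub>m (sum_list ns)) i j $$ (x, y) = (if i = j then 1\<^sub>m (ns ! i) else 0\<^sub>m (ns ! i) (ns ! j) :: 'a mat) $$ (x, y)"
    using px qy x y assms by (auto simp add: bsub_def)
qed (auto)

text \<open>Strided (interleaved) blocks, for tensor products with a 3-dimensional factor.\<close>

definition xt :: "nat \<Rightarrow> nat \<Rightarrow> nat \<Rightarrow> nat \<Rightarrow> 'a mat \<Rightarrow> nat \<Rightarrow> nat \<Rightarrow> 'a mat" where
  "xt a b n m M i j = mat n m (\<lambda>(x, y). M $$ (x * a + i, y * b + j))"

lemma xt_carrier[simp]: "xt a b n m M i j \<in> carrier_mat n m"
  and xt_dims[simp]: "dim_row (xt a b n m M i j) = n" "dim_col (xt a b n m M i j) = m"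
  by (auto simp: xt_def)

lemma stride_bound: "x < n \<Longrightarrow> i < a \<Longrightarrow> x * a + i < n * (a::nat)"
proof -
  assume "x < n" "i < a"
  then have "Suc x \<le> n" by simp
  then have "Suc x * a \<le> n * a" by (rule mult_right_mono) simp
  then show ?thesis using \<open>i < a\<close> by simp
qed

lemma xt_eq:
  assumes "M \<in> carrier_mat (n * a) (m * b)" "N \<in> carrier_mat (n * a) (m * b)"
    and "\<And>i j. i < a \<Longrightarrow> j < b \<Longrightarrow> xt a b n m M i j = xt a b n m N i j"
  shows "M = N"
proof (rule eq_matI)
  fix p q assume "p < dim_row N" "q < dim_col N"
  then have pq: "p < n * a" "q < m * b" using assms by auto
  then have a: "a > 0" and b: "b > 0" by (auto intro: ccontr)
  have i: "p mod a < a" "p div a < n" using a pq by (auto simp: less_mult_imp_div_less)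
  have j: "q mod b < b" "q div b < m" using b pq by (auto simp: less_mult_imp_div_less)
  have "xt a b n m M (p mod a) (q mod b) $$ (p div a, q div b) = xt a b n m N (p mod a) (q mod b) $$ (p div a, q div b)"
    using assms(3)[OF i(1) j(1)] by simp
  then show "M $$ (p, q) = N $$ (p, q)" using i j by (simp add: xt_def)
qed (use assms in auto)

lemma xt_mult:
  assumes M: "M \<in> carrier_mat (n * a) (k * c)" and N: "N \<in> carrier_mat (k * c) (m * b)"
    and i: "i < a" and j: "j < b" and c: "c > 0"
  shows "xt a b n m (M * N) i j = msum (c - 1) (\<lambda>l. xt a c n k M i l * xt c b k m N l j)"
proof -
  have car: "msum (c - 1) (\<lambda>l. xt a c n k M i l * xt c b k m N l j) \<in> carrier_mat n m"
    by (rule msum_carrier) auto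
  show ?thesis
  proof (rule eq_matI)
    fix x y assume "x < dim_row (msum (c - 1) (\<lambda>l. xt a c n k M i l * xt c b k m N l j))"
      "y < dim_col (msum (c - 1) (\<lambda>l. xt a c n k M i l * xt c b k m N l j))"
    then have x: "x < n" and y: "y < m" using car by auto
    have px: "x * a + i < n * a" by (rule stride_bound[OF x i])
    have qy: "y * b + j < m * b" by (rule stride_bound[OF y j])
    have "xt a b n m (M * N) i j $$ (x, y) = (\<Sum>z<k * c. M $$ (x * a + i, z) * N $$ (z, y * b + j))"
      using M N x y px qy by (simp add: xt_def scalar_prod_def row_def col_def atLeast0LessThan)
    also have "\<dots> = (\<Sum>l<c. \<Sum>w<k. M $$ (x * a + i, w * c + l) * N $$ (w * c + l, y * b + j))"
      by (rule sum_stride)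
    also have "\<dots> = (\<Sum>l<Suc (c - 1). (xt a c n k M i l * xt c b k m N l j) $$ (x, y))"
      using c x y by (simp add: xt_def scalar_prod_def row_def col_def atLeast0LessThan)
    also have "\<dots> = msum (c - 1) (\<lambda>l. xt a c n k M i l * xt c b k m N l j) $$ (x, y)"
      by (rule msum_index[symmetric]) (use x y in auto)
    finally show "xt a b n m (M * N) i j $$ (x, y) = msum (c - 1) (\<lambda>l. xt a c n k M i l * xt c b k m N l j) $$ (x, y)" .
  qed (use car in auto)
qed

lemma xt_add: assumes "A \<in> carrier_mat (n * a) (m * b)" "B \<in> carrier_mat (n * a) (m * b)" "i < a" "j < b"
  shows "xt a b n m (A + B) i j = xt a b n m A i j + xt a b n m B i j"
proof (rule eq_matI)
  fix x y assume "x < dim_row (xt a b n m A i j + xt a b n m B i j)" "y < dim_col (xt a b n m A i j + xt a b n m B i j)"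
  then have x: "x < n" and y: "y < m" by auto
  show "xt a b n m (A + B) i j $$ (x, y) = (xt a b n m A i j + xt a b n m B i j) $$ (x, y)"
    using stride_bound[OF x assms(3)] stride_bound[OF y assms(4)] x y assms by (simp add: xt_def)
qed auto

lemma xt_minus: assumes "A \<in> carrier_mat (n * a) (m * b)" "B \<in> carrier_mat (n * a) (m * b)" "i < a" "j < b"
  shows "xt a b n m (A - B) i j = xt a b n m A i j - xt a b n m B i j"
proof (rule eq_matI)
  fix x y assume "x < dim_row (xt a b n m A i j - xt a b n m B i j)" "y < dim_col (xt a b n m A i j - xt a b n m B i j)"
  then have x: "x < n" and y: "y < m" by auto
  show "xt a b n m (A - B) i j $$ (x, y) = (xt a b n m A i j - xt a b n m B i j) $$ (x, y)"
    using stride_bound[OF x assms(3)] stride_bound[OF y assms(4)] x y assms by (simp add: xt_def)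
qed auto

lemma xt_zero: assumes "i < a" "j < b"
  shows "xt a b n m (0\<^sub>m (n * a) (m * b)) i j = 0\<^sub>m n m"
proof (rule eq_matI)
  fix x y assume "x < dim_row (0\<^sub>m n m :: 'a mat)" "y < dim_col (0\<^sub>m n m :: 'a mat)"
  then have x: "x < n" and y: "y < m" by auto
  show "xt a b n m (0\<^sub>m (n * a) (m * b)) i j $$ (x, y) = (0\<^sub>m n m :: 'a mat) $$ (x, y)"
    using stride_bound[OF x assms(1)] stride_bound[OF y assms(2)] x y assms by (simp add: xt_def)
qed auto

lemma xt_one: assumes "i < a" "j < a"
  shows "xt a a n n (1\<^sub>m (n * a)) i j = (if i = j then 1\<^sub>m n else 0\<^sub>m n n)"
proof (rule eq_matI)
  fix x y assume "x < dim_row (if i = j then 1\<^sub>m n else 0\<^sub>m n n :: 'a mat)" "y < dim_col (if i = j then 1\<^sub>m n else 0\<^sub>m n n :: 'a mat)"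
  then have x: "x < n" and y: "y < n" by (auto split: if_splits)
  have "(x * a + i = y * a + j) = (x = y \<and> i = j)"
  proof
    assume h: "x * a + i = y * a + j"
    then have "(x * a + i) div a = (y * a + j) div a" "(x * a + i) mod a = (y * a + j) mod a" by auto
    then show "x = y \<and> i = j" using assms by auto
  qed auto
  then show "xt a a n n (1\<^sub>m (n * a)) i j $$ (x, y) = (if i = j then 1\<^sub>m n else 0\<^sub>m n n :: 'a mat) $$ (x, y)"
    using stride_bound[OF x assms(1)] stride_bound[OF y assms(2)] x y assms by (auto simp: xt_def)
qed (auto)

lemma xt_11: "M \<in> carrier_mat n m \<Longrightarrow> xt 1 1 n m M 0 0 = M"
  by (intro eq_matI) (auto simp: xt_def)

lemma xt_kron: assumes "A \<in> carrier_mat n m" "B \<in> carrier_mat a b" "i < a" "j < b"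
  shows "xt a b n m (kron A B) i j = (B $$ (i, j)) \<cdot>\<^sub>m A"
proof (rule eq_matI)
  fix x y assume "x < dim_row (B $$ (i, j) \<cdot>\<^sub>m A)" "y < dim_col (B $$ (i, j) \<cdot>\<^sub>m A)"
  then have x: "x < n" and y: "y < m" using assms by auto
  show "xt a b n m (kron A B) i j $$ (x, y) = (B $$ (i, j) \<cdot>\<^sub>m A) $$ (x, y)"
    using stride_bound[OF x assms(3)] stride_bound[OF y assms(4)] x y assms
    by (simp add: xt_def kron_def mult.commute)
qed (use assms in auto)

definition ilv :: "nat \<Rightarrow> nat \<Rightarrow> nat \<Rightarrow> nat \<Rightarrow> (nat \<Rightarrow> nat \<Rightarrow> 'a mat) \<Rightarrow> 'a mat" where
  "ilv a b n m B = mat (n * a) (m * b) (\<lambda>(p, q). B (p mod a) (q mod b) $$ (p div a, q div b))"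

lemma ilv_carrier[simp]: "ilv a b n m B \<in> carrier_mat (n * a) (m * b)"
  and ilv_dims[simp]: "dim_row (ilv a b n m B) = n * a" "dim_col (ilv a b n m B) = m * b"
  by (auto simp: ilv_def)

lemma xt_ilv: assumes "i < a" "j < b" "B i j \<in> carrier_mat n m"
  shows "xt a b n m (ilv a b n m B) i j = B i j"
proof (rule eq_matI)
  fix x y assume "x < dim_row (B i j)" "y < dim_col (B i j)"
  then have x: "x < n" and y: "y < m" using assms by auto
  show "xt a b n m (ilv a b n m B) i j $$ (x, y) = B i j $$ (x, y)"
    using stride_bound[OF x assms(1)] stride_bound[OF y assms(2)] x y assms
    by (simp add: xt_def ilv_def)
qed (use assms in auto)



lemma nth_concat_offs: "i < length ts \<Longrightarrow> x < length (ts ! i) \<Longrightarrow>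
   concat ts ! (offs (map length ts) i + x) = ts ! i ! x"
proof (induction ts arbitrary: i)
  case Nil then show ?case by simp
next
  case (Cons t ts) then show ?case by (cases i) (auto simp: nth_append)
qed

lemma graded_sub:
  assumes "graded_map (concat ss) (concat ts) k M" "i < length ts" "j < length ss"
  shows "graded_map (ss ! j) (ts ! i) k (bsub (map length ts) (map length ss) M i j)"
  unfolding graded_map_def
proof (intro conjI allI impI)
  show "bsub (map length ts) (map length ss) M i j \<in> carrier_mat (length (ts ! i)) (length (ss ! j))"
    using assms by auto
  fix x y assume x: "x < length (ts ! i)" and y: "y < length (ss ! j)"
    and nz: "bsub (map length ts) (map length ss) M i j $$ (x, y) \<noteq> 0"
  have px: "offs (map length ts) i + x < length (concat ts)"
    using offs_bound[of i "map length ts"] assms x by (simp add: length_concat)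
  have qy: "offs (map length ss) j + y < length (concat ss)"
    using offs_bound[of j "map length ss"] assms y by (simp add: length_concat)
  have "M $$ (offs (map length ts) i + x, offs (map length ss) j + y) \<noteq> 0"
    using nz x y assms by (simp add: bsub_def)
  then have "concat ts ! (offs (map length ts) i + x) = concat ss ! (offs (map length ss) j + y) + k"
    using assms(1) px qy unfolding graded_map_def by blast
  then show "ts ! i ! x = ss ! j ! y + k" using nth_concat_offs assms x y by metis
qed

lemma graded_subI:
  assumes "M \<in> carrier_mat (length (concat ts)) (length (concat ss))"
    and "\<And>i j. i < length ts \<Longrightarrow> j < length ss \<Longrightarrow> graded_map (ss ! j) (ts ! i) k (bsub (map length ts) (map length ss) M i j)"
  shows "graded_map (concat ss) (concat ts) k M"
  unfolding graded_map_def
proof (intro conjI allI impI)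
  show "M \<in> carrier_mat (length (concat ts)) (length (concat ss))" by fact
  fix p q assume p: "p < length (concat ts)" and q: "q < length (concat ss)" and nz: "M $$ (p, q) \<noteq> 0"
  from offs_decomp[of p "map length ts"] p obtain i x where i: "i < length ts" "x < length (ts ! i)"
    "p = offs (map length ts) i + x" by (auto simp: length_concat)
  from offs_decomp[of q "map length ss"] q obtain j y where j: "j < length ss" "y < length (ss ! j)"
    "q = offs (map length ss) j + y" by (auto simp: length_concat)
  have "bsub (map length ts) (map length ss) M i j $$ (x, y) \<noteq> 0" using nz i j by (simp add: bsub_def)
  then have "ts ! i ! x = ss ! j ! y + k" using assms(2)[OF i(1) j(1)] i j unfolding graded_map_def by auto
  then show "concat ts ! p = concat ss ! q + k" using i j nth_concat_offs by metis
qed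

definition tdegs :: "int list \<Rightarrow> int list \<Rightarrow> int list" where
  "tdegs xs ys = concat (map (\<lambda>a. map (\<lambda>b. a + b) ys) xs)"

lemma length_tdegs[simp]: "length (tdegs xs ys) = length xs * length ys"
  by (induction xs) (auto simp: tdegs_def)

lemma nth_tdegs: "x < length xs \<Longrightarrow> j < length ys \<Longrightarrow> tdegs xs ys ! (x * length ys + j) = xs ! x + ys ! j"
proof (induction xs arbitrary: x)
  case Nil then show ?case by simp
next
  case (Cons a xs)
  show ?case
  proof (cases x)
    case 0 then show ?thesis using Cons by (simp add: tdegs_def nth_append)
  next
    case (Suc x')
    have "tdegs (a # xs) ys ! (x * length ys + j) = tdegs xs ys ! (x' * length ys + j)"
      using Suc by (simp add: tdegs_def nth_append add.assoc)
    then show ?thesis using Cons Suc by simp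
  qed
qed

lemma tdegs_0: "tdegs xs [0] = xs"
  by (induction xs) (auto simp: tdegs_def)

lemma graded_extI:
  assumes car: "M \<in> carrier_mat (length xs * length ys) (length xs' * length ys')"
    and g: "\<And>i j. i < length ys \<Longrightarrow> j < length ys' \<Longrightarrow>
      graded_map xs' xs (k + ys' ! j - ys ! i) (xt (length ys) (length ys') (length xs) (length xs') M i j)"
  shows "graded_map (tdegs xs' ys') (tdegs xs ys) k M"
  unfolding graded_map_def
proof (intro conjI allI impI)
  show "M \<in> carrier_mat (length (tdegs xs ys)) (length (tdegs xs' ys'))" using car by simp
  fix p q assume p: "p < length (tdegs xs ys)" and q: "q < length (tdegs xs' ys')" and nz: "M $$ (p, q) \<noteq> 0"
  let ?a = "length ys" and ?b = "length ys'"
  have a: "?a > 0" and b: "?b > 0" using p q by (auto intro: ccontr)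
  have i: "p mod ?a < ?a" "p div ?a < length xs" using a p by (auto simp: less_mult_imp_div_less)
  have j: "q mod ?b < ?b" "q div ?b < length xs'" using b q by (auto simp: less_mult_imp_div_less)
  have pe: "p = (p div ?a) * ?a + p mod ?a" by simp
  have qe: "q = (q div ?b) * ?b + q mod ?b" by simp
  have "xt ?a ?b (length xs) (length xs') M (p mod ?a) (q mod ?b) $$ (p div ?a, q div ?b) \<noteq> 0"
    using nz i j by (simp add: xt_def)
  then have "xs ! (p div ?a) = xs' ! (q div ?b) + (k + ys' ! (q mod ?b) - ys ! (p mod ?a))"
    using g[OF i(1) j(1)] i j unfolding graded_map_def by auto
  moreover have "tdegs xs ys ! p = xs ! (p div ?a) + ys ! (p mod ?a)"
    using nth_tdegs[OF i(2) i(1)] pe by metis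
  moreover have "tdegs xs' ys' ! q = xs' ! (q div ?b) + ys' ! (q mod ?b)"
    using nth_tdegs[OF j(2) j(1)] qe by metis
  ultimately show "tdegs xs ys ! p = tdegs xs' ys' ! q + k" by simp
qed

lemma graded_zero[simp]: "graded_map s t k (0\<^sub>m (length t) (length s))"
  by (auto simp: graded_map_def)

lemma graded_add: "graded_map s t k (A :: 'a::comm_ring_1 mat) \<Longrightarrow> graded_map s t k B \<Longrightarrow> graded_map s t k (A + B)"
  unfolding graded_map_def
proof (intro conjI allI impI, goal_cases)
  case 1 then show ?case by auto
next
  case (2 i j)
  then have "A $$ (i, j) + B $$ (i, j) \<noteq> 0" by auto
  then have "A $$ (i, j) \<noteq> 0 \<or> B $$ (i, j) \<noteq> 0" by auto
  then show ?case using 2 by blast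
qed

lemma graded_uminus: "graded_map s t k (A :: 'a::comm_ring_1 mat) \<Longrightarrow> graded_map s t k (- A)"
  unfolding graded_map_def
proof (intro conjI allI impI, goal_cases)
  case 1 then show ?case by auto
next
  case (2 i j)
  then have "A $$ (i, j) \<noteq> 0" by auto
  then show ?case using 2 by blast
qed

lemma graded_mult: assumes "graded_map s t k1 (A :: 'a::comm_ring_1 mat)" "graded_map t u k2 B" "k = k1 + k2"
  shows "graded_map s u k (B * A)"
  unfolding graded_map_def
proof (intro conjI allI impI)
  show "B * A \<in> carrier_mat (length u) (length s)" using assms by (auto simp: graded_map_def)
  fix x y assume x: "x < length u" and y: "y < length s" and nz: "(B * A) $$ (x, y) \<noteq> 0"
  have "(\<Sum>z<length t. B $$ (x, z) * A $$ (z, y)) \<noteq> 0"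
    using nz x y assms by (auto simp: graded_map_def scalar_prod_def row_def col_def atLeast0LessThan)
  then obtain z where z: "z < length t" "B $$ (x, z) * A $$ (z, y) \<noteq> 0"
    by (meson sum.neutral lessThan_iff)
  then have "B $$ (x, z) \<noteq> 0" "A $$ (z, y) \<noteq> 0" by auto
  then show "u ! x = s ! y + k" using assms x y z unfolding graded_map_def by auto
qed

lemma graded_one: assumes "length s = length t" "\<And>x. x < length s \<Longrightarrow> t ! x = s ! x + k"
  shows "graded_map s t k (1\<^sub>m (length s))"
  using assms by (auto simp: graded_map_def)

lemma graded_diag: assumes "length s = length t" "\<And>x. x < length s \<Longrightarrow> t ! x = s ! x + k"
  shows "graded_map s t k (mat_diag (length s) f)"
  using assms by (auto simp: graded_map_def mat_diag_def)

lemma sign_mat_carrier[simp]: "sign_mat s \<in> carrier_mat (length s) (length s)"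
  and sign_mat_dims[simp]: "dim_row (sign_mat s) = length s" "dim_col (sign_mat s) = length s"
  by (auto simp: sign_mat_def mat_diag_def)

lemma sign_mat_sq: "sign_mat s * sign_mat s = (1\<^sub>m (length s) :: 'a::comm_ring_1 mat)"
  unfolding sign_mat_def mat_diag_diag by (rule eq_matI) (auto simp: mat_diag_def)

lemma sign_comm:
  assumes g: "graded_map s t k (A :: 'a::comm_ring_1 mat)"
  shows "sign_mat t * A = (if even k then A * sign_mat s else - (A * sign_mat s))"
proof -
  have A: "A \<in> carrier_mat (length t) (length s)" using g by (simp add: graded_map_def)
  have l: "sign_mat t * A = mat (length t) (length s) (\<lambda>(i, j). (if even (t ! i) then 1 else -1) * A $$ (i, j))"
    unfolding sign_mat_def by (rule mat_diag_mult_left[OF A])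
  have r: "A * sign_mat s = mat (length t) (length s) (\<lambda>(i, j). A $$ (i, j) * (if even (s ! j) then 1 else -1))"
    unfolding sign_mat_def by (rule mat_diag_mult_right[OF A])
  have e: "(if even (t ! i) then 1 else -1) * A $$ (i, j) = (if even k then 1 else -1) * (A $$ (i, j) * (if even (s ! j) then 1 else - 1))"
    if ij: "i < length t" "j < length s" for i j
  proof (cases "A $$ (i, j) = 0")
    case False
    then have "t ! i = s ! j + k" using g ij unfolding graded_map_def by blast
    then show ?thesis by (auto simp: mult.commute)
  qed simp
  show ?thesis unfolding l r
    by (intro eq_matI) (auto simp: e A)
qed



lemma carrier_mat_iff: "A \<in> carrier_mat r c \<longleftrightarrow> dim_row A = r \<and> dim_col A = c"
  unfolding carrier_mat_def by blast

lemma length_shift_degs[simp]: "length (shift_degs i ds) = length ds"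
  by (simp add: shift_degs_def)

lemma bsub_block3_00:
  fixes A11 :: "'a::zero mat"
  assumes "A11 \<in> carrier_mat n1 m1" "A12 \<in> carrier_mat n1 m2" "A13 \<in> carrier_mat n1 m3"
    "A21 \<in> carrier_mat n2 m1" "A22 \<in> carrier_mat n2 m2" "A23 \<in> carrier_mat n2 m3"
    "A31 \<in> carrier_mat n3 m1" "A32 \<in> carrier_mat n3 m2" "A33 \<in> carrier_mat n3 m3"
  shows "bsub [n1, n2, n3] [m1, m2, m3] (block3 A11 A12 A13 A21 A22 A23 A31 A32 A33) 0 0 = A11"
  using assms unfolding carrier_mat_iff
  by (intro eq_matI) (simp_all add: bsub_def block3_def row_blocks_def append_rows_def offs_def)

lemma bsub_block3_01:
  fixes A11 :: "'a::zero mat"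
  assumes "A11 \<in> carrier_mat n1 m1" "A12 \<in> carrier_mat n1 m2" "A13 \<in> carrier_mat n1 m3"
    "A21 \<in> carrier_mat n2 m1" "A22 \<in> carrier_mat n2 m2" "A23 \<in> carrier_mat n2 m3"
    "A31 \<in> carrier_mat n3 m1" "A32 \<in> carrier_mat n3 m2" "A33 \<in> carrier_mat n3 m3"
  shows "bsub [n1, n2, n3] [m1, m2, m3] (block3 A11 A12 A13 A21 A22 A23 A31 A32 A33) 0 (Suc 0) = A12"
  using assms unfolding carrier_mat_iff
  by (intro eq_matI) (simp_all add: bsub_def block3_def row_blocks_def append_rows_def offs_def)

lemma bsub_block3_02:
  fixes A11 :: "'a::zero mat"
  assumes "A11 \<in> carrier_mat n1 m1" "A12 \<in> carrier_mat n1 m2" "A13 \<in> carrier_mat n1 m3"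
    "A21 \<in> carrier_mat n2 m1" "A22 \<in> carrier_mat n2 m2" "A23 \<in> carrier_mat n2 m3"
    "A31 \<in> carrier_mat n3 m1" "A32 \<in> carrier_mat n3 m2" "A33 \<in> carrier_mat n3 m3"
  shows "bsub [n1, n2, n3] [m1, m2, m3] (block3 A11 A12 A13 A21 A22 A23 A31 A32 A33) 0 2 = A13"
  using assms unfolding carrier_mat_iff
  by (intro eq_matI) (simp_all add: bsub_def block3_def row_blocks_def append_rows_def offs_def)

lemma bsub_block3_10:
  fixes A11 :: "'a::zero mat"
  assumes "A11 \<in> carrier_mat n1 m1" "A12 \<in> carrier_mat n1 m2" "A13 \<in> carrier_mat n1 m3"
    "A21 \<in> carrier_mat n2 m1" "A22 \<in> carrier_mat n2 m2" "A23 \<in> carrier_mat n2 m3"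
    "A31 \<in> carrier_mat n3 m1" "A32 \<in> carrier_mat n3 m2" "A33 \<in> carrier_mat n3 m3"
  shows "bsub [n1, n2, n3] [m1, m2, m3] (block3 A11 A12 A13 A21 A22 A23 A31 A32 A33) (Suc 0) 0 = A21"
  using assms unfolding carrier_mat_iff
  by (intro eq_matI) (simp_all add: bsub_def block3_def row_blocks_def append_rows_def offs_def)

lemma bsub_block3_11:
  fixes A11 :: "'a::zero mat"
  assumes "A11 \<in> carrier_mat n1 m1" "A12 \<in> carrier_mat n1 m2" "A13 \<in> carrier_mat n1 m3"
    "A21 \<in> carrier_mat n2 m1" "A22 \<in> carrier_mat n2 m2" "A23 \<in> carrier_mat n2 m3"
    "A31 \<in> carrier_mat n3 m1" "A32 \<in> carrier_mat n3 m2" "A33 \<in> carrier_mat n3 m3"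
  shows "bsub [n1, n2, n3] [m1, m2, m3] (block3 A11 A12 A13 A21 A22 A23 A31 A32 A33) (Suc 0) (Suc 0) = A22"
  using assms unfolding carrier_mat_iff
  by (intro eq_matI) (simp_all add: bsub_def block3_def row_blocks_def append_rows_def offs_def)

lemma bsub_block3_12:
  fixes A11 :: "'a::zero mat"
  assumes "A11 \<in> carrier_mat n1 m1" "A12 \<in> carrier_mat n1 m2" "A13 \<in> carrier_mat n1 m3"
    "A21 \<in> carrier_mat n2 m1" "A22 \<in> carrier_mat n2 m2" "A23 \<in> carrier_mat n2 m3"
    "A31 \<in> carrier_mat n3 m1" "A32 \<in> carrier_mat n3 m2" "A33 \<in> carrier_mat n3 m3"
  shows "bsub [n1, n2, n3] [m1, m2, m3] (block3 A11 A12 A13 A21 A22 A23 A31 A32 A33) (Suc 0) 2 = A23"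
  using assms unfolding carrier_mat_iff
  by (intro eq_matI) (simp_all add: bsub_def block3_def row_blocks_def append_rows_def offs_def)

lemma bsub_block3_20:
  fixes A11 :: "'a::zero mat"
  assumes "A11 \<in> carrier_mat n1 m1" "A12 \<in> carrier_mat n1 m2" "A13 \<in> carrier_mat n1 m3"
    "A21 \<in> carrier_mat n2 m1" "A22 \<in> carrier_mat n2 m2" "A23 \<in> carrier_mat n2 m3"
    "A31 \<in> carrier_mat n3 m1" "A32 \<in> carrier_mat n3 m2" "A33 \<in> carrier_mat n3 m3"
  shows "bsub [n1, n2, n3] [m1, m2, m3] (block3 A11 A12 A13 A21 A22 A23 A31 A32 A33) 2 0 = A31"
  using assms unfolding carrier_mat_iff
  by (intro eq_matI) (simp_all add: bsub_def block3_def row_blocks_def append_rows_def offs_def)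

lemma bsub_block3_21:
  fixes A11 :: "'a::zero mat"
  assumes "A11 \<in> carrier_mat n1 m1" "A12 \<in> carrier_mat n1 m2" "A13 \<in> carrier_mat n1 m3"
    "A21 \<in> carrier_mat n2 m1" "A22 \<in> carrier_mat n2 m2" "A23 \<in> carrier_mat n2 m3"
    "A31 \<in> carrier_mat n3 m1" "A32 \<in> carrier_mat n3 m2" "A33 \<in> carrier_mat n3 m3"
  shows "bsub [n1, n2, n3] [m1, m2, m3] (block3 A11 A12 A13 A21 A22 A23 A31 A32 A33) 2 (Suc 0) = A32"
  using assms unfolding carrier_mat_iff
  by (intro eq_matI) (simp_all add: bsub_def block3_def row_blocks_def append_rows_def offs_def)

lemma bsub_block3_22:
  fixes A11 :: "'a::zero mat"
  assumes "A11 \<in> carrier_mat n1 m1" "A12 \<in> carrier_mat n1 m2" "A13 \<in> carrier_mat n1 m3"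
    "A21 \<in> carrier_mat n2 m1" "A22 \<in> carrier_mat n2 m2" "A23 \<in> carrier_mat n2 m3"
    "A31 \<in> carrier_mat n3 m1" "A32 \<in> carrier_mat n3 m2" "A33 \<in> carrier_mat n3 m3"
  shows "bsub [n1, n2, n3] [m1, m2, m3] (block3 A11 A12 A13 A21 A22 A23 A31 A32 A33) 2 2 = A33"
  using assms unfolding carrier_mat_iff
  by (intro eq_matI) (simp_all add: bsub_def block3_def row_blocks_def append_rows_def offs_def)



lemma msum_3[simp]: "msum (Suc (Suc 0)) f = f 0 + f 1 + f 2"
  by (simp add: numeral_2_eq_2)
lemma msum_5[simp]: "msum (Suc (Suc (Suc (Suc 0)))) f = f 0 + f 1 + f 2 + f 3 + f 4"
  by (simp add: numeral_2_eq_2 numeral_3_eq_3 eval_nat_numeral)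

lemma mult_carrier_iff[simp]: "A * B \<in> carrier_mat r c \<longleftrightarrow> dim_row A = r \<and> dim_col B = c"
  unfolding carrier_mat_def by auto
lemma add_carrier_iff[simp]: "A + B \<in> carrier_mat r c \<longleftrightarrow> dim_row B = r \<and> dim_col B = c"
  unfolding carrier_mat_def by auto
lemma minus_carrier_iff[simp]: "A - B \<in> carrier_mat r c \<longleftrightarrow> dim_row B = r \<and> dim_col B = c"
  unfolding carrier_mat_def by auto
lemma uminus_carrier_iff'[simp]: "- B \<in> carrier_mat r c \<longleftrightarrow> dim_row B = r \<and> dim_col B = c"
  unfolding carrier_mat_def by auto

declare msum.simps[simp del]

lemma uminus_zero_mat'[simp]: "- (0\<^sub>m n m :: 'a::group_add mat) = 0\<^sub>m n m"
  by (rule eq_matI) auto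


definition tbl :: "nat list \<Rightarrow> nat list \<Rightarrow> ((nat \<times> nat) \<times> 'a::zero mat) list \<Rightarrow> nat \<Rightarrow> nat \<Rightarrow> 'a mat" where
  "tbl ns ms es i j = (case map_of es (i, j) of Some A \<Rightarrow> A | None \<Rightarrow> 0\<^sub>m (ns ! i) (ms ! j))"

locale Sc =
  fixes dc dr :: "int list" and d v \<delta>1 \<delta>2 r :: "'a::comm_ring_1 mat"
  assumes SC: "is_S_complex dc dr d v \<delta>1 \<delta>2 r"
begin

abbreviation "nc \<equiv> length dc"
abbreviation "nr \<equiv> length dr"
abbreviation "X \<equiv> S_tot dc dr d v \<delta>1 \<delta>2 r"
abbreviation "S \<equiv> neg_susp dc dr d v \<delta>1 \<delta>2 r"
abbreviation "xs \<equiv> [nc, nc, nr]"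
abbreviation "ss \<equiv> [nc, nr, nc, nr, nr]"

definition "eC = (sign_mat dc :: 'a mat)"
definition "eR = (sign_mat dr :: 'a mat)"

lemma dims[simp]:
  "dim_row d = nc" "dim_col d = nc" "dim_row v = nc" "dim_col v = nc"
  "dim_row \<delta>2 = nc" "dim_col \<delta>2 = nr" "dim_row \<delta>1 = nr" "dim_col \<delta>1 = nc"
  "dim_row r = nr" "dim_col r = nr"
  "dim_row eC = nc" "dim_col eC = nc" "dim_row eR = nr" "dim_col eR = nr"
  using SC by (auto simp: is_S_complex_def Let_def eC_def eR_def)

lemma carriers[simp]:
  "d \<in> carrier_mat nc nc" "v \<in> carrier_mat nc nc" "\<delta>2 \<in> carrier_mat nc nr"
  "\<delta>1 \<in> carrier_mat nr nc" "r \<in> carrier_mat nr nr" "eC \<in> carrier_mat nc nc" "eR \<in> carrier_mat nr nr"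
  by (auto simp: carrier_mat_iff)

lemma degs_X: "degs X = concat [dc, shift_degs (-1) dc, dr]"
  by (simp add: S_tot_def Let_def)

lemma degs_S: "degs S = concat [shift_degs 2 dc, shift_degs 2 dr, shift_degs 1 dc, shift_degs 1 dr, dr]"
  by (simp add: neg_susp_def S_tot_def Let_def shift_degs_def)

lemma len_X[simp]: "length (degs X) = nc + (nc + nr)"
  by (simp add: S_tot_def Let_def)

lemma len_S[simp]: "length (degs S) = nc + (nr + (nc + (nr + nr)))"
  by (simp add: neg_susp_def S_tot_def Let_def)

lemma DX_carrier[simp]: "dif X \<in> carrier_mat (nc + (nc + nr)) (nc + (nc + nr))"
  and DX_dims[simp]: "dim_row (dif X) = nc + (nc + nr)" "dim_col (dif X) = nc + (nc + nr)"
  by (auto simp: S_tot_def Let_def block3_def row_blocks_def append_rows_def carrier_mat_iff)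

lemma CX_carrier[simp]: "chi X \<in> carrier_mat (nc + (nc + nr)) (nc + (nc + nr))"
  and CX_dims[simp]: "dim_row (chi X) = nc + (nc + nr)" "dim_col (chi X) = nc + (nc + nr)"
  by (auto simp: S_tot_def Let_def block3_def row_blocks_def append_rows_def carrier_mat_iff)

lemma DS_carrier[simp]: "dif S \<in> carrier_mat (nc + (nr + (nc + (nr + nr)))) (nc + (nr + (nc + (nr + nr))))"
  and DS_dims[simp]: "dim_row (dif S) = nc + (nr + (nc + (nr + nr)))" "dim_col (dif S) = nc + (nr + (nc + (nr + nr)))"
  by (auto simp: neg_susp_def S_tot_def Let_def block3_def row_blocks_def append_rows_def carrier_mat_iff)

lemma CS_carrier[simp]: "chi S \<in> carrier_mat (nc + (nr + (nc + (nr + nr)))) (nc + (nr + (nc + (nr + nr))))"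
  and CS_dims[simp]: "dim_row (chi S) = nc + (nr + (nc + (nr + nr)))" "dim_col (chi S) = nc + (nr + (nc + (nr + nr)))"
  by (auto simp: neg_susp_def S_tot_def Let_def block3_def row_blocks_def append_rows_def carrier_mat_iff)

lemma sign_X: "sign_mat (degs X) = sign_mat (dc @ shift_degs (-1) dc @ dr)"
  by (simp add: S_tot_def Let_def)

abbreviation "N \<equiv> nc + (nc + nr)"
abbreviation "M \<equiv> nc + (nr + (nc + (nr + nr)))"

definition "F0 = blk xs ss (tbl xs ss [((0, 0), 1\<^sub>m nc), ((2, 1), 1\<^sub>m nr), ((1, 2), 1\<^sub>m nc)])"
definition "F1 = blk xs ss (tbl xs ss [((0, 2), eC), ((2, 3), eR)])"
definition "F2 = blk xs ss (tbl xs ss [((0, 0), v), ((0, 1), \<delta>2), ((1, 2), v), ((1, 3), \<delta>2), ((2, 4), 1\<^sub>m nr)])"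
definition "G0 = blk ss xs (tbl ss xs [((0, 0), 1\<^sub>m nc), ((1, 2), 1\<^sub>m nr), ((2, 1), 1\<^sub>m nc), ((4, 1), \<delta>1)])"
definition "G1 = blk ss xs (tbl ss xs [((3, 2), eR), ((4, 0), - (\<delta>1 * eC))])"
definition "G2 = blk ss xs (tbl ss xs [((4, 2), 1\<^sub>m nr)])"
definition "K20 = blk xs xs (tbl xs xs [((0, 1), 1\<^sub>m nc)])"
definition "K21 = blk xs xs (tbl xs xs [((0, 0), - eC), ((1, 1), eC)])"

end


context Sc begin
lemma DX_00[simp]: "bsub [nc, nc, nr] [nc, nc, nr] (dif X) 0 0 = d"
  by (simp add: S_tot_def Let_def bsub_block3_00)
lemma CX_00[simp]: "bsub [nc, nc, nr] [nc, nc, nr] (chi X) 0 0 = 0\<^sub>m nc nc"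
  by (simp add: S_tot_def Let_def bsub_block3_00)
lemma DX_01[simp]: "bsub [nc, nc, nr] [nc, nc, nr] (dif X) 0 (Suc 0) = 0\<^sub>m nc nc"
  by (simp add: S_tot_def Let_def bsub_block3_01)
lemma CX_01[simp]: "bsub [nc, nc, nr] [nc, nc, nr] (chi X) 0 (Suc 0) = 0\<^sub>m nc nc"
  by (simp add: S_tot_def Let_def bsub_block3_01)
lemma DX_02[simp]: "bsub [nc, nc, nr] [nc, nc, nr] (dif X) 0 2 = 0\<^sub>m nc nr"
  by (simp add: S_tot_def Let_def bsub_block3_02)
lemma CX_02[simp]: "bsub [nc, nc, nr] [nc, nc, nr] (chi X) 0 2 = 0\<^sub>m nc nr"
  by (simp add: S_tot_def Let_def bsub_block3_02)
lemma DX_10[simp]: "bsub [nc, nc, nr] [nc, nc, nr] (dif X) (Suc 0) 0 = v"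
  by (simp add: S_tot_def Let_def bsub_block3_10)
lemma CX_10[simp]: "bsub [nc, nc, nr] [nc, nc, nr] (chi X) (Suc 0) 0 = 1\<^sub>m nc"
  by (simp add: S_tot_def Let_def bsub_block3_10)
lemma DX_11[simp]: "bsub [nc, nc, nr] [nc, nc, nr] (dif X) (Suc 0) (Suc 0) = - d"
  by (simp add: S_tot_def Let_def bsub_block3_11)
lemma CX_11[simp]: "bsub [nc, nc, nr] [nc, nc, nr] (chi X) (Suc 0) (Suc 0) = 0\<^sub>m nc nc"
  by (simp add: S_tot_def Let_def bsub_block3_11)
lemma DX_12[simp]: "bsub [nc, nc, nr] [nc, nc, nr] (dif X) (Suc 0) 2 = \<delta>2"
  by (simp add: S_tot_def Let_def bsub_block3_12)
lemma CX_12[simp]: "bsub [nc, nc, nr] [nc, nc, nr] (chi X) (Suc 0) 2 = 0\<^sub>m nc nr"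
  by (simp add: S_tot_def Let_def bsub_block3_12)
lemma DX_20[simp]: "bsub [nc, nc, nr] [nc, nc, nr] (dif X) 2 0 = \<delta>1"
  by (simp add: S_tot_def Let_def bsub_block3_20)
lemma CX_20[simp]: "bsub [nc, nc, nr] [nc, nc, nr] (chi X) 2 0 = 0\<^sub>m nr nc"
  by (simp add: S_tot_def Let_def bsub_block3_20)
lemma DX_21[simp]: "bsub [nc, nc, nr] [nc, nc, nr] (dif X) 2 (Suc 0) = 0\<^sub>m nr nc"
  by (simp add: S_tot_def Let_def bsub_block3_21)
lemma CX_21[simp]: "bsub [nc, nc, nr] [nc, nc, nr] (chi X) 2 (Suc 0) = 0\<^sub>m nr nc"
  by (simp add: S_tot_def Let_def bsub_block3_21)
lemma DX_22[simp]: "bsub [nc, nc, nr] [nc, nc, nr] (dif X) 2 2 = r"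
  by (simp add: S_tot_def Let_def bsub_block3_22)
lemma CX_22[simp]: "bsub [nc, nc, nr] [nc, nc, nr] (chi X) 2 2 = 0\<^sub>m nr nr"
  by (simp add: S_tot_def Let_def bsub_block3_22)
lemma DS_00[simp]: "bsub [nc, nr, nc, nr, nr] [nc, nr, nc, nr, nr] (dif S) 0 0 = d"
  unfolding neg_susp_def S_tot_def Let_def
  by (rule eq_matI) (simp_all add: bsub_def block3_def row_blocks_def append_rows_def offs_def)
lemma CS_00[simp]: "bsub [nc, nr, nc, nr, nr] [nc, nr, nc, nr, nr] (chi S) 0 0 = 0\<^sub>m nc nc"
  unfolding neg_susp_def S_tot_def Let_def
  by (rule eq_matI) (simp_all add: bsub_def block3_def row_blocks_def append_rows_def offs_def)
lemma DS_01[simp]: "bsub [nc, nr, nc, nr, nr] [nc, nr, nc, nr, nr] (dif S) 0 (Suc 0) = 0\<^sub>m nc nr"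
  unfolding neg_susp_def S_tot_def Let_def
  by (rule eq_matI) (simp_all add: bsub_def block3_def row_blocks_def append_rows_def offs_def)
lemma CS_01[simp]: "bsub [nc, nr, nc, nr, nr] [nc, nr, nc, nr, nr] (chi S) 0 (Suc 0) = 0\<^sub>m nc nr"
  unfolding neg_susp_def S_tot_def Let_def
  by (rule eq_matI) (simp_all add: bsub_def block3_def row_blocks_def append_rows_def offs_def)
lemma DS_02[simp]: "bsub [nc, nr, nc, nr, nr] [nc, nr, nc, nr, nr] (dif S) 0 2 = 0\<^sub>m nc nc"
  unfolding neg_susp_def S_tot_def Let_def
  by (rule eq_matI) (simp_all add: bsub_def block3_def row_blocks_def append_rows_def offs_def)
lemma CS_02[simp]: "bsub [nc, nr, nc, nr, nr] [nc, nr, nc, nr, nr] (chi S) 0 2 = 0\<^sub>m nc nc"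
  unfolding neg_susp_def S_tot_def Let_def
  by (rule eq_matI) (simp_all add: bsub_def block3_def row_blocks_def append_rows_def offs_def)
lemma DS_03[simp]: "bsub [nc, nr, nc, nr, nr] [nc, nr, nc, nr, nr] (dif S) 0 3 = 0\<^sub>m nc nr"
  unfolding neg_susp_def S_tot_def Let_def
  by (rule eq_matI) (simp_all add: bsub_def block3_def row_blocks_def append_rows_def offs_def)
lemma CS_03[simp]: "bsub [nc, nr, nc, nr, nr] [nc, nr, nc, nr, nr] (chi S) 0 3 = 0\<^sub>m nc nr"
  unfolding neg_susp_def S_tot_def Let_def
  by (rule eq_matI) (simp_all add: bsub_def block3_def row_blocks_def append_rows_def offs_def)
lemma DS_04[simp]: "bsub [nc, nr, nc, nr, nr] [nc, nr, nc, nr, nr] (dif S) 0 4 = 0\<^sub>m nc nr"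
  unfolding neg_susp_def S_tot_def Let_def
  by (rule eq_matI) (simp_all add: bsub_def block3_def row_blocks_def append_rows_def offs_def)
lemma CS_04[simp]: "bsub [nc, nr, nc, nr, nr] [nc, nr, nc, nr, nr] (chi S) 0 4 = 0\<^sub>m nc nr"
  unfolding neg_susp_def S_tot_def Let_def
  by (rule eq_matI) (simp_all add: bsub_def block3_def row_blocks_def append_rows_def offs_def)
lemma DS_10[simp]: "bsub [nc, nr, nc, nr, nr] [nc, nr, nc, nr, nr] (dif S) (Suc 0) 0 = \<delta>1"
  unfolding neg_susp_def S_tot_def Let_def
  by (rule eq_matI) (simp_all add: bsub_def block3_def row_blocks_def append_rows_def offs_def)
lemma CS_10[simp]: "bsub [nc, nr, nc, nr, nr] [nc, nr, nc, nr, nr] (chi S) (Suc 0) 0 = 0\<^sub>m nr nc"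
  unfolding neg_susp_def S_tot_def Let_def
  by (rule eq_matI) (simp_all add: bsub_def block3_def row_blocks_def append_rows_def offs_def)
lemma DS_11[simp]: "bsub [nc, nr, nc, nr, nr] [nc, nr, nc, nr, nr] (dif S) (Suc 0) (Suc 0) = r"
  unfolding neg_susp_def S_tot_def Let_def
  by (rule eq_matI) (simp_all add: bsub_def block3_def row_blocks_def append_rows_def offs_def)
lemma CS_11[simp]: "bsub [nc, nr, nc, nr, nr] [nc, nr, nc, nr, nr] (chi S) (Suc 0) (Suc 0) = 0\<^sub>m nr nr"
  unfolding neg_susp_def S_tot_def Let_def
  by (rule eq_matI) (simp_all add: bsub_def block3_def row_blocks_def append_rows_def offs_def)
lemma DS_12[simp]: "bsub [nc, nr, nc, nr, nr] [nc, nr, nc, nr, nr] (dif S) (Suc 0) 2 = 0\<^sub>m nr nc"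
  unfolding neg_susp_def S_tot_def Let_def
  by (rule eq_matI) (simp_all add: bsub_def block3_def row_blocks_def append_rows_def offs_def)
lemma CS_12[simp]: "bsub [nc, nr, nc, nr, nr] [nc, nr, nc, nr, nr] (chi S) (Suc 0) 2 = 0\<^sub>m nr nc"
  unfolding neg_susp_def S_tot_def Let_def
  by (rule eq_matI) (simp_all add: bsub_def block3_def row_blocks_def append_rows_def offs_def)
lemma DS_13[simp]: "bsub [nc, nr, nc, nr, nr] [nc, nr, nc, nr, nr] (dif S) (Suc 0) 3 = 0\<^sub>m nr nr"
  unfolding neg_susp_def S_tot_def Let_def
  by (rule eq_matI) (simp_all add: bsub_def block3_def row_blocks_def append_rows_def offs_def)
lemma CS_13[simp]: "bsub [nc, nr, nc, nr, nr] [nc, nr, nc, nr, nr] (chi S) (Suc 0) 3 = 0\<^sub>m nr nr"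
  unfolding neg_susp_def S_tot_def Let_def
  by (rule eq_matI) (simp_all add: bsub_def block3_def row_blocks_def append_rows_def offs_def)
lemma DS_14[simp]: "bsub [nc, nr, nc, nr, nr] [nc, nr, nc, nr, nr] (dif S) (Suc 0) 4 = 0\<^sub>m nr nr"
  unfolding neg_susp_def S_tot_def Let_def
  by (rule eq_matI) (simp_all add: bsub_def block3_def row_blocks_def append_rows_def offs_def)
lemma CS_14[simp]: "bsub [nc, nr, nc, nr, nr] [nc, nr, nc, nr, nr] (chi S) (Suc 0) 4 = 0\<^sub>m nr nr"
  unfolding neg_susp_def S_tot_def Let_def
  by (rule eq_matI) (simp_all add: bsub_def block3_def row_blocks_def append_rows_def offs_def)
lemma DS_20[simp]: "bsub [nc, nr, nc, nr, nr] [nc, nr, nc, nr, nr] (dif S) 2 0 = v"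
  unfolding neg_susp_def S_tot_def Let_def
  by (rule eq_matI) (simp_all add: bsub_def block3_def row_blocks_def append_rows_def offs_def)
lemma CS_20[simp]: "bsub [nc, nr, nc, nr, nr] [nc, nr, nc, nr, nr] (chi S) 2 0 = 1\<^sub>m nc"
  unfolding neg_susp_def S_tot_def Let_def
  by (rule eq_matI) (simp_all add: bsub_def block3_def row_blocks_def append_rows_def offs_def)
lemma DS_21[simp]: "bsub [nc, nr, nc, nr, nr] [nc, nr, nc, nr, nr] (dif S) 2 (Suc 0) = \<delta>2"
  unfolding neg_susp_def S_tot_def Let_def
  by (rule eq_matI) (simp_all add: bsub_def block3_def row_blocks_def append_rows_def offs_def)
lemma CS_21[simp]: "bsub [nc, nr, nc, nr, nr] [nc, nr, nc, nr, nr] (chi S) 2 (Suc 0) = 0\<^sub>m nc nr"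
  unfolding neg_susp_def S_tot_def Let_def
  by (rule eq_matI) (simp_all add: bsub_def block3_def row_blocks_def append_rows_def offs_def)
lemma DS_22[simp]: "bsub [nc, nr, nc, nr, nr] [nc, nr, nc, nr, nr] (dif S) 2 2 = - d"
  unfolding neg_susp_def S_tot_def Let_def
  by (rule eq_matI) (simp_all add: bsub_def block3_def row_blocks_def append_rows_def offs_def)
lemma CS_22[simp]: "bsub [nc, nr, nc, nr, nr] [nc, nr, nc, nr, nr] (chi S) 2 2 = 0\<^sub>m nc nc"
  unfolding neg_susp_def S_tot_def Let_def
  by (rule eq_matI) (simp_all add: bsub_def block3_def row_blocks_def append_rows_def offs_def)
lemma DS_23[simp]: "bsub [nc, nr, nc, nr, nr] [nc, nr, nc, nr, nr] (dif S) 2 3 = 0\<^sub>m nc nr"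
  unfolding neg_susp_def S_tot_def Let_def
  by (rule eq_matI) (simp_all add: bsub_def block3_def row_blocks_def append_rows_def offs_def)
lemma CS_23[simp]: "bsub [nc, nr, nc, nr, nr] [nc, nr, nc, nr, nr] (chi S) 2 3 = 0\<^sub>m nc nr"
  unfolding neg_susp_def S_tot_def Let_def
  by (rule eq_matI) (simp_all add: bsub_def block3_def row_blocks_def append_rows_def offs_def)
lemma DS_24[simp]: "bsub [nc, nr, nc, nr, nr] [nc, nr, nc, nr, nr] (dif S) 2 4 = 0\<^sub>m nc nr"
  unfolding neg_susp_def S_tot_def Let_def
  by (rule eq_matI) (simp_all add: bsub_def block3_def row_blocks_def append_rows_def offs_def)
lemma CS_24[simp]: "bsub [nc, nr, nc, nr, nr] [nc, nr, nc, nr, nr] (chi S) 2 4 = 0\<^sub>m nc nr"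
  unfolding neg_susp_def S_tot_def Let_def
  by (rule eq_matI) (simp_all add: bsub_def block3_def row_blocks_def append_rows_def offs_def)
lemma DS_30[simp]: "bsub [nc, nr, nc, nr, nr] [nc, nr, nc, nr, nr] (dif S) 3 0 = 0\<^sub>m nr nc"
  unfolding neg_susp_def S_tot_def Let_def
  by (rule eq_matI) (simp_all add: bsub_def block3_def row_blocks_def append_rows_def offs_def)
lemma CS_30[simp]: "bsub [nc, nr, nc, nr, nr] [nc, nr, nc, nr, nr] (chi S) 3 0 = 0\<^sub>m nr nc"
  unfolding neg_susp_def S_tot_def Let_def
  by (rule eq_matI) (simp_all add: bsub_def block3_def row_blocks_def append_rows_def offs_def)
lemma DS_31[simp]: "bsub [nc, nr, nc, nr, nr] [nc, nr, nc, nr, nr] (dif S) 3 (Suc 0) = 0\<^sub>m nr nr"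
  unfolding neg_susp_def S_tot_def Let_def
  by (rule eq_matI) (simp_all add: bsub_def block3_def row_blocks_def append_rows_def offs_def)
lemma CS_31[simp]: "bsub [nc, nr, nc, nr, nr] [nc, nr, nc, nr, nr] (chi S) 3 (Suc 0) = 1\<^sub>m nr"
  unfolding neg_susp_def S_tot_def Let_def
  by (rule eq_matI) (simp_all add: bsub_def block3_def row_blocks_def append_rows_def offs_def)
lemma DS_32[simp]: "bsub [nc, nr, nc, nr, nr] [nc, nr, nc, nr, nr] (dif S) 3 2 = - \<delta>1"
  unfolding neg_susp_def S_tot_def Let_def
  by (rule eq_matI) (simp_all add: bsub_def block3_def row_blocks_def append_rows_def offs_def)
lemma CS_32[simp]: "bsub [nc, nr, nc, nr, nr] [nc, nr, nc, nr, nr] (chi S) 3 2 = 0\<^sub>m nr nc"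
  unfolding neg_susp_def S_tot_def Let_def
  by (rule eq_matI) (simp_all add: bsub_def block3_def row_blocks_def append_rows_def offs_def)
lemma DS_33[simp]: "bsub [nc, nr, nc, nr, nr] [nc, nr, nc, nr, nr] (dif S) 3 3 = - r"
  unfolding neg_susp_def S_tot_def Let_def
  by (rule eq_matI) (simp_all add: bsub_def block3_def row_blocks_def append_rows_def offs_def)
lemma CS_33[simp]: "bsub [nc, nr, nc, nr, nr] [nc, nr, nc, nr, nr] (chi S) 3 3 = 0\<^sub>m nr nr"
  unfolding neg_susp_def S_tot_def Let_def
  by (rule eq_matI) (simp_all add: bsub_def block3_def row_blocks_def append_rows_def offs_def)
lemma DS_34[simp]: "bsub [nc, nr, nc, nr, nr] [nc, nr, nc, nr, nr] (dif S) 3 4 = 1\<^sub>m nr"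
  unfolding neg_susp_def S_tot_def Let_def
  by (rule eq_matI) (simp_all add: bsub_def block3_def row_blocks_def append_rows_def offs_def)
lemma CS_34[simp]: "bsub [nc, nr, nc, nr, nr] [nc, nr, nc, nr, nr] (chi S) 3 4 = 0\<^sub>m nr nr"
  unfolding neg_susp_def S_tot_def Let_def
  by (rule eq_matI) (simp_all add: bsub_def block3_def row_blocks_def append_rows_def offs_def)
lemma DS_40[simp]: "bsub [nc, nr, nc, nr, nr] [nc, nr, nc, nr, nr] (dif S) 4 0 = \<delta>1 * v"
  unfolding neg_susp_def S_tot_def Let_def
  by (rule eq_matI) (simp_all add: bsub_def block3_def row_blocks_def append_rows_def offs_def)
lemma CS_40[simp]: "bsub [nc, nr, nc, nr, nr] [nc, nr, nc, nr, nr] (chi S) 4 0 = 0\<^sub>m nr nc"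
  unfolding neg_susp_def S_tot_def Let_def
  by (rule eq_matI) (simp_all add: bsub_def block3_def row_blocks_def append_rows_def offs_def)
lemma DS_41[simp]: "bsub [nc, nr, nc, nr, nr] [nc, nr, nc, nr, nr] (dif S) 4 (Suc 0) = \<delta>1 * \<delta>2"
  unfolding neg_susp_def S_tot_def Let_def
  by (rule eq_matI) (simp_all add: bsub_def block3_def row_blocks_def append_rows_def offs_def)
lemma CS_41[simp]: "bsub [nc, nr, nc, nr, nr] [nc, nr, nc, nr, nr] (chi S) 4 (Suc 0) = 0\<^sub>m nr nr"
  unfolding neg_susp_def S_tot_def Let_def
  by (rule eq_matI) (simp_all add: bsub_def block3_def row_blocks_def append_rows_def offs_def)
lemma DS_42[simp]: "bsub [nc, nr, nc, nr, nr] [nc, nr, nc, nr, nr] (dif S) 4 2 = 0\<^sub>m nr nc"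
  unfolding neg_susp_def S_tot_def Let_def
  by (rule eq_matI) (simp_all add: bsub_def block3_def row_blocks_def append_rows_def offs_def)
lemma CS_42[simp]: "bsub [nc, nr, nc, nr, nr] [nc, nr, nc, nr, nr] (chi S) 4 2 = 0\<^sub>m nr nc"
  unfolding neg_susp_def S_tot_def Let_def
  by (rule eq_matI) (simp_all add: bsub_def block3_def row_blocks_def append_rows_def offs_def)
lemma DS_43[simp]: "bsub [nc, nr, nc, nr, nr] [nc, nr, nc, nr, nr] (dif S) 4 3 = 0\<^sub>m nr nr"
  unfolding neg_susp_def S_tot_def Let_def
  by (rule eq_matI) (simp_all add: bsub_def block3_def row_blocks_def append_rows_def offs_def)
lemma CS_43[simp]: "bsub [nc, nr, nc, nr, nr] [nc, nr, nc, nr, nr] (chi S) 4 3 = 0\<^sub>m nr nr"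
  unfolding neg_susp_def S_tot_def Let_def
  by (rule eq_matI) (simp_all add: bsub_def block3_def row_blocks_def append_rows_def offs_def)
lemma DS_44[simp]: "bsub [nc, nr, nc, nr, nr] [nc, nr, nc, nr, nr] (dif S) 4 4 = r"
  unfolding neg_susp_def S_tot_def Let_def
  by (rule eq_matI) (simp_all add: bsub_def block3_def row_blocks_def append_rows_def offs_def)
lemma CS_44[simp]: "bsub [nc, nr, nc, nr, nr] [nc, nr, nc, nr, nr] (chi S) 4 4 = 0\<^sub>m nr nr"
  unfolding neg_susp_def S_tot_def Let_def
  by (rule eq_matI) (simp_all add: bsub_def block3_def row_blocks_def append_rows_def offs_def)
lemma EX_00[simp]: "bsub [nc, nc, nr] [nc, nc, nr] (sign_mat (degs X)) 0 0 = eC"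
  unfolding sign_X
  by (rule eq_matI) (auto simp: bsub_def sign_mat_def mat_diag_def nth_append shift_degs_def eC_def eR_def offs_def)
lemma EX_01[simp]: "bsub [nc, nc, nr] [nc, nc, nr] (sign_mat (degs X)) 0 (Suc 0) = 0\<^sub>m nc nc"
  unfolding sign_X
  by (rule eq_matI) (auto simp: bsub_def sign_mat_def mat_diag_def nth_append shift_degs_def eC_def eR_def offs_def)
lemma EX_02[simp]: "bsub [nc, nc, nr] [nc, nc, nr] (sign_mat (degs X)) 0 2 = 0\<^sub>m nc nr"
  unfolding sign_X
  by (rule eq_matI) (auto simp: bsub_def sign_mat_def mat_diag_def nth_append shift_degs_def eC_def eR_def offs_def)
lemma EX_10[simp]: "bsub [nc, nc, nr] [nc, nc, nr] (sign_mat (degs X)) (Suc 0) 0 = 0\<^sub>m nc nc"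
  unfolding sign_X
  by (rule eq_matI) (auto simp: bsub_def sign_mat_def mat_diag_def nth_append shift_degs_def eC_def eR_def offs_def)
lemma EX_11[simp]: "bsub [nc, nc, nr] [nc, nc, nr] (sign_mat (degs X)) (Suc 0) (Suc 0) = - eC"
  unfolding sign_X
  by (rule eq_matI) (auto simp: bsub_def sign_mat_def mat_diag_def nth_append shift_degs_def eC_def eR_def offs_def)
lemma EX_12[simp]: "bsub [nc, nc, nr] [nc, nc, nr] (sign_mat (degs X)) (Suc 0) 2 = 0\<^sub>m nc nr"
  unfolding sign_X
  by (rule eq_matI) (auto simp: bsub_def sign_mat_def mat_diag_def nth_append shift_degs_def eC_def eR_def offs_def)
lemma EX_20[simp]: "bsub [nc, nc, nr] [nc, nc, nr] (sign_mat (degs X)) 2 0 = 0\<^sub>m nr nc"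
  unfolding sign_X
  by (rule eq_matI) (auto simp: bsub_def sign_mat_def mat_diag_def nth_append shift_degs_def eC_def eR_def offs_def)
lemma EX_21[simp]: "bsub [nc, nc, nr] [nc, nc, nr] (sign_mat (degs X)) 2 (Suc 0) = 0\<^sub>m nr nc"
  unfolding sign_X
  by (rule eq_matI) (auto simp: bsub_def sign_mat_def mat_diag_def nth_append shift_degs_def eC_def eR_def offs_def)
lemma EX_22[simp]: "bsub [nc, nc, nr] [nc, nc, nr] (sign_mat (degs X)) 2 2 = eR"
  unfolding sign_X
  by (rule eq_matI) (auto simp: bsub_def sign_mat_def mat_diag_def nth_append shift_degs_def eC_def eR_def offs_def)

lemma tbl_carrier: "i < length ns \<Longrightarrow> j < length ms \<Longrightarrow> (\<forall>k A. map_of es (i, j) = Some A \<longrightarrow> A \<in> carrier_mat (ns ! i) (ms ! j))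
   \<Longrightarrow> tbl ns ms es i j \<in> carrier_mat (ns ! i) (ms ! j)"
  by (auto simp: tbl_def split: option.splits)

lemma bsub_blk_tbl[simp]: "i < length ns \<Longrightarrow> j < length ms \<Longrightarrow> (\<forall>A. map_of es (i, j) = Some A \<longrightarrow> A \<in> carrier_mat (ns ! i) (ms ! j))
   \<Longrightarrow> bsub ns ms (blk ns ms (tbl ns ms es)) i j = tbl ns ms es i j"
  by (rule bsub_blk) (auto simp: tbl_def split: option.splits)

lemma tbl_eval[simp]: "tbl ns ms es i j = (case map_of es (i, j) of Some A \<Rightarrow> A | None \<Rightarrow> 0\<^sub>m (ns ! i) (ms ! j))"
  by (simp add: tbl_def)

lemma F0_dims[simp]: "dim_row F0 = nc + (nc + nr)" "dim_col F0 = nc + (nr + (nc + (nr + nr)))" by (simp_all add: F0_def)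
lemma F1_dims[simp]: "dim_row F1 = nc + (nc + nr)" "dim_col F1 = nc + (nr + (nc + (nr + nr)))" by (simp_all add: F1_def)
lemma F2_dims[simp]: "dim_row F2 = nc + (nc + nr)" "dim_col F2 = nc + (nr + (nc + (nr + nr)))" by (simp_all add: F2_def)
lemma G0_dims[simp]: "dim_col G0 = nc + (nc + nr)" "dim_row G0 = nc + (nr + (nc + (nr + nr)))" by (simp_all add: G0_def)
lemma G1_dims[simp]: "dim_col G1 = nc + (nc + nr)" "dim_row G1 = nc + (nr + (nc + (nr + nr)))" by (simp_all add: G1_def)
lemma G2_dims[simp]: "dim_col G2 = nc + (nc + nr)" "dim_row G2 = nc + (nr + (nc + (nr + nr)))" by (simp_all add: G2_def)
lemma K20_dims[simp]: "dim_row K20 = nc + (nc + nr)" "dim_col K20 = nc + (nc + nr)" by (simp_all add: K20_def)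
lemma K21_dims[simp]: "dim_row K21 = nc + (nc + nr)" "dim_col K21 = nc + (nc + nr)" by (simp_all add: K21_def)
lemma EX_dims[simp]: "dim_row (sign_mat (degs X) :: 'a mat) = nc + (nc + nr)" "dim_col (sign_mat (degs X) :: 'a mat) = nc + (nc + nr)"
  by simp_all

lemma bsub_eq_XX:
  assumes "A \<in> carrier_mat (sum_list [nc, nc, nr]) (sum_list [nc, nc, nr])" "B \<in> carrier_mat (sum_list [nc, nc, nr]) (sum_list [nc, nc, nr])"
  "bsub [nc, nc, nr] [nc, nc, nr] A 0 0 = bsub [nc, nc, nr] [nc, nc, nr] B 0 0" "bsub [nc, nc, nr] [nc, nc, nr] A 0 (Suc 0) = bsub [nc, nc, nr] [nc, nc, nr] B 0 (Suc 0)" "bsub [nc, nc, nr] [nc, nc, nr] A 0 2 = bsub [nc, nc, nr] [nc, nc, nr] B 0 2" "bsub [nc, nc, nr] [nc, nc, nr] A (Suc 0) 0 = bsub [nc, nc, nr] [nc, nc, nr] B (Suc 0) 0" "bsub [nc, nc, nr] [nc, nc, nr] A (Suc 0) (Suc 0) = bsub [nc, nc, nr] [nc, nc, nr] B (Suc 0) (Suc 0)" "bsub [nc, nc, nr] [nc, nc, nr] A (Suc 0) 2 = bsub [nc, nc, nr] [nc, nc, nr] B (Suc 0) 2" "bsub [nc, nc, nr] [nc, nc, nr] A 2 0 = bsub [nc, nc, nr] [nc, nc, nr] B 2 0" "bsub [nc, nc, nr] [nc, nc, nr] A 2 (Suc 0) = bsub [nc, nc, nr] [nc, nc, nr] B 2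 (Suc 0)" "bsub [nc, nc, nr] [nc, nc, nr] A 2 2 = bsub [nc, nc, nr] [nc, nc, nr] B 2 2"
  shows "A = B"
proof (rule bsub_eq[OF assms(1,2)])
  fix i j assume "i < length [nc, nc, nr]" "j < length [nc, nc, nr]"
  then show "bsub [nc, nc, nr] [nc, nc, nr] A i j = bsub [nc, nc, nr] [nc, nc, nr] B i j"
    using assms(3-) by (auto simp: less_Suc_eq numeral_eq_Suc)
qed

lemma bsub_eq_XS:
  assumes "A \<in> carrier_mat (sum_list [nc, nc, nr]) (sum_list [nc, nr, nc, nr, nr])" "B \<in> carrier_mat (sum_list [nc, nc, nr]) (sum_list [nc, nr, nc, nr, nr])"
  "bsub [nc, nc, nr] [nc, nr, nc, nr, nr] A 0 0 = bsub [nc, nc, nr] [nc, nr, nc, nr, nr] B 0 0" "bsub [nc, nc, nr] [nc, nr, nc, nr, nr] A 0 (Suc 0) = bsub [nc, nc, nr] [nc, nr, nc, nr, nr] B 0 (Suc 0)" "bsub [nc, nc, nr] [nc, nr, nc, nr, nr] A 0 2 = bsub [nc, nc, nr] [nc, nr, nc, nr, nr] B 0 2" "bsub [nc, nc, nr] [nc, nr, nc, nr, nr] A 0 3 = bsub [nc, nc, nr] [nc, nr, nc, nr, nr] B 0 3" "bsub [nc, nc, nr] [nc, nr, nc, nr, nr] A 0 4 = bsub [nc, nc, nr] [nc, nr, nc, nr, nr] B 0 4" "bsub [nc, nc, nr] [nc, nr, nc, nr, nr] A (Suc 0) 0 = bsub [nc, nc, nr] [nc, nr, nc, nr, nr] B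 (Suc 0) 0" "bsub [nc, nc, nr] [nc, nr, nc, nr, nr] A (Suc 0) (Suc 0) = bsub [nc, nc, nr] [nc, nr, nc, nr, nr] B (Suc 0) (Suc 0)" "bsub [nc, nc, nr] [nc, nr, nc, nr, nr] A (Suc 0) 2 = bsub [nc, nc, nr] [nc, nr, nc, nr, nr] B (Suc 0) 2" "bsub [nc, nc, nr] [nc, nr, nc, nr, nr] A (Suc 0) 3 = bsub [nc, nc, nr] [nc, nr, nc, nr, nr] B (Suc 0) 3" "bsub [nc, nc, nr] [nc, nr, nc, nr, nr] A (Suc 0) 4 = bsub [nc, nc, nr] [nc, nr, nc, nr, nr] B (Suc 0) 4" "bsub [nc, nc, nr] [nc, nr, nc, nr, nr] A 2 0 = bsub [nc, nc, nr] [nc, nr, nc, nr, nr] B 2 0" "bsub [nc, nc, nr] [nc, nr, nc, nr, nr] A 2 (Suc 0) = bsub [nc, nc, nr] [nc, nr, nc, nr, nr] B 2 (Suc 0)" "bsub [nc, nc, nr] [nc, nr, nc, nr, nr] A 2 2 = bsub [nc, nc, nr] [nc, nr, nc, nr, nr] B 2 2" "bsub [nc, nc, nr] [nc, nr, nc, nr, nr] A 2 3 = bsub [nc, nc, nr] [nc, nr, nc, nr, nr] B 2 3" "bsub [nc, nc, nr] [nc, nr, nc, nr, nr] A 2 4 = bsub [nc, nc, nr] [nc, nr, nc, nr, nr] B 2 4"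
  shows "A = B"
proof (rule bsub_eq[OF assms(1,2)])
  fix i j assume "i < length [nc, nc, nr]" "j < length [nc, nr, nc, nr, nr]"
  then show "bsub [nc, nc, nr] [nc, nr, nc, nr, nr] A i j = bsub [nc, nc, nr] [nc, nr, nc, nr, nr] B i j"
    using assms(3-) by (auto simp: less_Suc_eq numeral_eq_Suc)
qed

lemma bsub_eq_SX:
  assumes "A \<in> carrier_mat (sum_list [nc, nr, nc, nr, nr]) (sum_list [nc, nc, nr])" "B \<in> carrier_mat (sum_list [nc, nr, nc, nr, nr]) (sum_list [nc, nc, nr])"
  "bsub [nc, nr, nc, nr, nr] [nc, nc, nr] A 0 0 = bsub [nc, nr, nc, nr, nr] [nc, nc, nr] B 0 0" "bsub [nc, nr, nc, nr, nr] [nc, nc, nr] A 0 (Suc 0) = bsub [nc, nr, nc, nr, nr] [nc, nc, nr] B 0 (Suc 0)" "bsub [nc, nr, nc, nr, nr] [nc, nc, nr] A 0 2 = bsub [nc, nr, nc, nr, nr] [nc, nc, nr] B 0 2" "bsub [nc, nr, nc, nr, nr] [nc, nc, nr] A (Suc 0) 0 = bsub [nc, nr, nc, nr, nr] [nc, nc, nr] B (Suc 0) 0" "bsub [nc, nr, nc, nr, nr] [nc, nc, nr] A (Suc 0) (Suc 0) = bsub [nc, nr, nc, nr, nr] [nc, nc, nr] B (Suc 0) (Suc 0)" "bsub [nc, nr, nc, nr, nr] [nc, nc, nr] A (Suc 0) 2 = bsub [nc, nr, nc, nr, nr] [nc, nc, nr] B (Suc 0) 2" "bsub [nc, nr, nc,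 nr, nr] [nc, nc, nr] A 2 0 = bsub [nc, nr, nc, nr, nr] [nc, nc, nr] B 2 0" "bsub [nc, nr, nc, nr, nr] [nc, nc, nr] A 2 (Suc 0) = bsub [nc, nr, nc, nr, nr] [nc, nc, nr] B 2 (Suc 0)" "bsub [nc, nr, nc, nr, nr] [nc, nc, nr] A 2 2 = bsub [nc, nr, nc, nr, nr] [nc, nc, nr] B 2 2" "bsub [nc, nr, nc, nr, nr] [nc, nc, nr] A 3 0 = bsub [nc, nr, nc, nr, nr] [nc, nc, nr] B 3 0" "bsub [nc, nr, nc, nr, nr] [nc, nc, nr] A 3 (Suc 0) = bsub [nc, nr, nc, nr, nr] [nc, nc, nr] B 3 (Suc 0)" "bsub [nc, nr, nc, nr, nr] [nc, nc, nr] A 3 2 = bsub [nc, nr, nc, nr, nr] [nc, nc, nr] B 3 2" "bsub [nc, nr, nc, nr, nr] [nc, nc, nr] A 4 0 = bsub [nc, nr, nc, nr, nr] [nc, nc, nr] B 4 0" "bsub [nc, nr, nc, nr, nr] [nc, nc, nr] A 4 (Suc 0) = bsub [nc, nr, nc, nr, nr] [nc, nc, nr] B 4 (Suc 0)" "bsub [nc, nr, nc, nr, nr] [nc, nc, nr] A 4 2 = bsub [nc, nr, nc, nr, nr] [nc, nc, nr] B 4 2"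
  shows "A = B"
proof (rule bsub_eq[OF assms(1,2)])
  fix i j assume "i < length [nc, nr, nc, nr, nr]" "j < length [nc, nc, nr]"
  then show "bsub [nc, nr, nc, nr, nr] [nc, nc, nr] A i j = bsub [nc, nr, nc, nr, nr] [nc, nc, nr] B i j"
    using assms(3-) by (auto simp: less_Suc_eq numeral_eq_Suc)
qed

lemma bsub_eq_SS:
  assumes "A \<in> carrier_mat (sum_list [nc, nr, nc, nr, nr]) (sum_list [nc, nr, nc, nr, nr])" "B \<in> carrier_mat (sum_list [nc, nr, nc, nr, nr]) (sum_list [nc, nr, nc, nr, nr])"
  "bsub [nc, nr, nc, nr, nr] [nc, nr, nc, nr, nr] A 0 0 = bsub [nc, nr, nc, nr, nr] [nc, nr, nc, nr, nr] B 0 0" "bsub [nc, nr, nc, nr, nr] [nc, nr, nc, nr, nr] A 0 (Suc 0) = bsub [nc, nr, nc, nr, nr] [nc, nr, nc, nr, nr] B 0 (Suc 0)" "bsub [nc, nr, nc, nr, nr] [nc, nr, nc, nr, nr] A 0 2 = bsub [nc, nr, nc, nr, nr] [nc, nr, nc, nr, nr] B 0 2" "bsub [nc, nr, nc, nr, nr] [nc, nr, nc, nr, nr] A 0 3 = bsub [nc, nr, nc, nr, nr] [nc, nr, nc, nr, nr] B 0 3" "bsub [nc, nr, nc, nr, nr] [nc, nr, nc, nr, nr] A 0 4 = bsub [nc, nr, nc, nr, nr] [nc, nr, nc, nr, nr] B 0 4" "bsub [nc, nr, nc, nr, nr] [nc, nr, nc, nr, nr] A (Suc 0) 0 = bsub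 [nc, nr, nc, nr, nr] [nc, nr, nc, nr, nr] B (Suc 0) 0" "bsub [nc, nr, nc, nr, nr] [nc, nr, nc, nr, nr] A (Suc 0) (Suc 0) = bsub [nc, nr, nc, nr, nr] [nc, nr, nc, nr, nr] B (Suc 0) (Suc 0)" "bsub [nc, nr, nc, nr, nr] [nc, nr, nc, nr, nr] A (Suc 0) 2 = bsub [nc, nr, nc, nr, nr] [nc, nr, nc, nr, nr] B (Suc 0) 2" "bsub [nc, nr, nc, nr, nr] [nc, nr, nc, nr, nr] A (Suc 0) 3 = bsub [nc, nr, nc, nr, nr] [nc, nr, nc, nr, nr] B (Suc 0) 3" "bsub [nc, nr, nc, nr, nr] [nc, nr, nc, nr, nr] A (Suc 0) 4 = bsub [nc, nr, nc, nr, nr] [nc, nr, nc, nr, nr] B (Suc 0) 4" "bsub [nc, nr, nc, nr, nr] [nc, nr, nc, nr, nr] A 2 0 = bsub [nc, nr, nc, nr, nr] [nc, nr, nc, nr, nr] B 2 0" "bsub [nc, nr, nc, nr, nr] [nc, nr, nc, nr, nr] A 2 (Suc 0) = bsub [nc, nr, nc, nr, nr] [nc, nr, nc, nr, nr] B 2 (Suc 0)" "bsub [nc, nr, nc, nr, nr] [nc, nr, nc, nr, nr] A 2 2 = bsub [nc, nr, nc, nr, nr] [nc, nr, nc, nr, nr] B 2 2" "bsub [nc, nr, nc, nr, nr] [nc, nr, nc, nr, nr] A 2 3 = bsub [nc, nr, nc, nr, nr] [nc, nr, nc, nr, nr] B 2 3" "bsub [nc, nr, nc, nr, nr] [nc,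 nr, nc, nr, nr] A 2 4 = bsub [nc, nr, nc, nr, nr] [nc, nr, nc, nr, nr] B 2 4" "bsub [nc, nr, nc, nr, nr] [nc, nr, nc, nr, nr] A 3 0 = bsub [nc, nr, nc, nr, nr] [nc, nr, nc, nr, nr] B 3 0" "bsub [nc, nr, nc, nr, nr] [nc, nr, nc, nr, nr] A 3 (Suc 0) = bsub [nc, nr, nc, nr, nr] [nc, nr, nc, nr, nr] B 3 (Suc 0)" "bsub [nc, nr, nc, nr, nr] [nc, nr, nc, nr, nr] A 3 2 = bsub [nc, nr, nc, nr, nr] [nc, nr, nc, nr, nr] B 3 2" "bsub [nc, nr, nc, nr, nr] [nc, nr, nc, nr, nr] A 3 3 = bsub [nc, nr, nc, nr, nr] [nc, nr, nc, nr, nr] B 3 3" "bsub [nc, nr, nc, nr, nr] [nc, nr, nc, nr, nr] A 3 4 = bsub [nc, nr, nc, nr, nr] [nc, nr, nc, nr, nr] B 3 4" "bsub [nc, nr, nc, nr, nr] [nc, nr, nc, nr, nr] A 4 0 = bsub [nc, nr, nc, nr, nr] [nc, nr, nc, nr, nr] B 4 0" "bsub [nc, nr, nc, nr, nr] [nc, nr, nc, nr, nr] A 4 (Suc 0) = bsub [nc, nr, nc, nr, nr] [nc, nr, nc, nr, nr] B 4 (Suc 0)" "bsub [nc, nr, nc, nr, nr] [nc, nr, nc, nr, nr] A 4 2 = bsub [nc, nr, nc, nr, nr] [nc, nr, nc, nr, nr] B 4 2" "bsub [nc, nr, nc, nr, nr] [nc, nr, nc, nr, nr] A 4 3 = bsub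 [nc, nr, nc, nr, nr] [nc, nr, nc, nr, nr] B 4 3" "bsub [nc, nr, nc, nr, nr] [nc, nr, nc, nr, nr] A 4 4 = bsub [nc, nr, nc, nr, nr] [nc, nr, nc, nr, nr] B 4 4"
  shows "A = B"
proof (rule bsub_eq[OF assms(1,2)])
  fix i j assume "i < length [nc, nr, nc, nr, nr]" "j < length [nc, nr, nc, nr, nr]"
  then show "bsub [nc, nr, nc, nr, nr] [nc, nr, nc, nr, nr] A i j = bsub [nc, nr, nc, nr, nr] [nc, nr, nc, nr, nr] B i j"
    using assms(3-) by (auto simp: less_Suc_eq numeral_eq_Suc)
qed

lemma bsub_F0_00[simp]: "bsub [nc, nc, nr] [nc, nr, nc, nr, nr] F0 0 0 = 1\<^sub>m nc"
  unfolding F0_def by (subst bsub_blk) simp_all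
lemma bsub_F0_01[simp]: "bsub [nc, nc, nr] [nc, nr, nc, nr, nr] F0 0 (Suc 0) = 0\<^sub>m nc nr"
  unfolding F0_def by (subst bsub_blk) simp_all
lemma bsub_F0_02[simp]: "bsub [nc, nc, nr] [nc, nr, nc, nr, nr] F0 0 2 = 0\<^sub>m nc nc"
  unfolding F0_def by (subst bsub_blk) simp_all
lemma bsub_F0_03[simp]: "bsub [nc, nc, nr] [nc, nr, nc, nr, nr] F0 0 3 = 0\<^sub>m nc nr"
  unfolding F0_def by (subst bsub_blk) simp_all
lemma bsub_F0_04[simp]: "bsub [nc, nc, nr] [nc, nr, nc, nr, nr] F0 0 4 = 0\<^sub>m nc nr"
  unfolding F0_def by (subst bsub_blk) simp_all
lemma bsub_F0_10[simp]: "bsub [nc, nc, nr] [nc, nr, nc, nr, nr] F0 (Suc 0) 0 = 0\<^sub>m nc nc"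
  unfolding F0_def by (subst bsub_blk) simp_all
lemma bsub_F0_11[simp]: "bsub [nc, nc, nr] [nc, nr, nc, nr, nr] F0 (Suc 0) (Suc 0) = 0\<^sub>m nc nr"
  unfolding F0_def by (subst bsub_blk) simp_all
lemma bsub_F0_12[simp]: "bsub [nc, nc, nr] [nc, nr, nc, nr, nr] F0 (Suc 0) 2 = 1\<^sub>m nc"
  unfolding F0_def by (subst bsub_blk) simp_all
lemma bsub_F0_13[simp]: "bsub [nc, nc, nr] [nc, nr, nc, nr, nr] F0 (Suc 0) 3 = 0\<^sub>m nc nr"
  unfolding F0_def by (subst bsub_blk) simp_all
lemma bsub_F0_14[simp]: "bsub [nc, nc, nr] [nc, nr, nc, nr, nr] F0 (Suc 0) 4 = 0\<^sub>m nc nr"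
  unfolding F0_def by (subst bsub_blk) simp_all
lemma bsub_F0_20[simp]: "bsub [nc, nc, nr] [nc, nr, nc, nr, nr] F0 2 0 = 0\<^sub>m nr nc"
  unfolding F0_def by (subst bsub_blk) simp_all
lemma bsub_F0_21[simp]: "bsub [nc, nc, nr] [nc, nr, nc, nr, nr] F0 2 (Suc 0) = 1\<^sub>m nr"
  unfolding F0_def by (subst bsub_blk) simp_all
lemma bsub_F0_22[simp]: "bsub [nc, nc, nr] [nc, nr, nc, nr, nr] F0 2 2 = 0\<^sub>m nr nc"
  unfolding F0_def by (subst bsub_blk) simp_all
lemma bsub_F0_23[simp]: "bsub [nc, nc, nr] [nc, nr, nc, nr, nr] F0 2 3 = 0\<^sub>m nr nr"
  unfolding F0_def by (subst bsub_blk) simp_all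
lemma bsub_F0_24[simp]: "bsub [nc, nc, nr] [nc, nr, nc, nr, nr] F0 2 4 = 0\<^sub>m nr nr"
  unfolding F0_def by (subst bsub_blk) simp_all
lemma bsub_F1_00[simp]: "bsub [nc, nc, nr] [nc, nr, nc, nr, nr] F1 0 0 = 0\<^sub>m nc nc"
  unfolding F1_def by (subst bsub_blk) simp_all
lemma bsub_F1_01[simp]: "bsub [nc, nc, nr] [nc, nr, nc, nr, nr] F1 0 (Suc 0) = 0\<^sub>m nc nr"
  unfolding F1_def by (subst bsub_blk) simp_all
lemma bsub_F1_02[simp]: "bsub [nc, nc, nr] [nc, nr, nc, nr, nr] F1 0 2 = eC"
  unfolding F1_def by (subst bsub_blk) simp_all
lemma bsub_F1_03[simp]: "bsub [nc, nc, nr] [nc, nr, nc, nr, nr] F1 0 3 = 0\<^sub>m nc nr"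
  unfolding F1_def by (subst bsub_blk) simp_all
lemma bsub_F1_04[simp]: "bsub [nc, nc, nr] [nc, nr, nc, nr, nr] F1 0 4 = 0\<^sub>m nc nr"
  unfolding F1_def by (subst bsub_blk) simp_all
lemma bsub_F1_10[simp]: "bsub [nc, nc, nr] [nc, nr, nc, nr, nr] F1 (Suc 0) 0 = 0\<^sub>m nc nc"
  unfolding F1_def by (subst bsub_blk) simp_all
lemma bsub_F1_11[simp]: "bsub [nc, nc, nr] [nc, nr, nc, nr, nr] F1 (Suc 0) (Suc 0) = 0\<^sub>m nc nr"
  unfolding F1_def by (subst bsub_blk) simp_all
lemma bsub_F1_12[simp]: "bsub [nc, nc, nr] [nc, nr, nc, nr, nr] F1 (Suc 0) 2 = 0\<^sub>m nc nc"
  unfolding F1_def by (subst bsub_blk) simp_all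
lemma bsub_F1_13[simp]: "bsub [nc, nc, nr] [nc, nr, nc, nr, nr] F1 (Suc 0) 3 = 0\<^sub>m nc nr"
  unfolding F1_def by (subst bsub_blk) simp_all
lemma bsub_F1_14[simp]: "bsub [nc, nc, nr] [nc, nr, nc, nr, nr] F1 (Suc 0) 4 = 0\<^sub>m nc nr"
  unfolding F1_def by (subst bsub_blk) simp_all
lemma bsub_F1_20[simp]: "bsub [nc, nc, nr] [nc, nr, nc, nr, nr] F1 2 0 = 0\<^sub>m nr nc"
  unfolding F1_def by (subst bsub_blk) simp_all
lemma bsub_F1_21[simp]: "bsub [nc, nc, nr] [nc, nr, nc, nr, nr] F1 2 (Suc 0) = 0\<^sub>m nr nr"
  unfolding F1_def by (subst bsub_blk) simp_all
lemma bsub_F1_22[simp]: "bsub [nc, nc, nr] [nc, nr, nc, nr, nr] F1 2 2 = 0\<^sub>m nr nc"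
  unfolding F1_def by (subst bsub_blk) simp_all
lemma bsub_F1_23[simp]: "bsub [nc, nc, nr] [nc, nr, nc, nr, nr] F1 2 3 = eR"
  unfolding F1_def by (subst bsub_blk) simp_all
lemma bsub_F1_24[simp]: "bsub [nc, nc, nr] [nc, nr, nc, nr, nr] F1 2 4 = 0\<^sub>m nr nr"
  unfolding F1_def by (subst bsub_blk) simp_all
lemma bsub_F2_00[simp]: "bsub [nc, nc, nr] [nc, nr, nc, nr, nr] F2 0 0 = v"
  unfolding F2_def by (subst bsub_blk) simp_all
lemma bsub_F2_01[simp]: "bsub [nc, nc, nr] [nc, nr, nc, nr, nr] F2 0 (Suc 0) = \<delta>2"
  unfolding F2_def by (subst bsub_blk) simp_all
lemma bsub_F2_02[simp]: "bsub [nc, nc, nr] [nc, nr, nc, nr, nr] F2 0 2 = 0\<^sub>m nc nc"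
  unfolding F2_def by (subst bsub_blk) simp_all
lemma bsub_F2_03[simp]: "bsub [nc, nc, nr] [nc, nr, nc, nr, nr] F2 0 3 = 0\<^sub>m nc nr"
  unfolding F2_def by (subst bsub_blk) simp_all
lemma bsub_F2_04[simp]: "bsub [nc, nc, nr] [nc, nr, nc, nr, nr] F2 0 4 = 0\<^sub>m nc nr"
  unfolding F2_def by (subst bsub_blk) simp_all
lemma bsub_F2_10[simp]: "bsub [nc, nc, nr] [nc, nr, nc, nr, nr] F2 (Suc 0) 0 = 0\<^sub>m nc nc"
  unfolding F2_def by (subst bsub_blk) simp_all
lemma bsub_F2_11[simp]: "bsub [nc, nc, nr] [nc, nr, nc, nr, nr] F2 (Suc 0) (Suc 0) = 0\<^sub>m nc nr"
  unfolding F2_def by (subst bsub_blk) simp_all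
lemma bsub_F2_12[simp]: "bsub [nc, nc, nr] [nc, nr, nc, nr, nr] F2 (Suc 0) 2 = v"
  unfolding F2_def by (subst bsub_blk) simp_all
lemma bsub_F2_13[simp]: "bsub [nc, nc, nr] [nc, nr, nc, nr, nr] F2 (Suc 0) 3 = \<delta>2"
  unfolding F2_def by (subst bsub_blk) simp_all
lemma bsub_F2_14[simp]: "bsub [nc, nc, nr] [nc, nr, nc, nr, nr] F2 (Suc 0) 4 = 0\<^sub>m nc nr"
  unfolding F2_def by (subst bsub_blk) simp_all
lemma bsub_F2_20[simp]: "bsub [nc, nc, nr] [nc, nr, nc, nr, nr] F2 2 0 = 0\<^sub>m nr nc"
  unfolding F2_def by (subst bsub_blk) simp_all
lemma bsub_F2_21[simp]: "bsub [nc, nc, nr] [nc, nr, nc, nr, nr] F2 2 (Suc 0) = 0\<^sub>m nr nr"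
  unfolding F2_def by (subst bsub_blk) simp_all
lemma bsub_F2_22[simp]: "bsub [nc, nc, nr] [nc, nr, nc, nr, nr] F2 2 2 = 0\<^sub>m nr nc"
  unfolding F2_def by (subst bsub_blk) simp_all
lemma bsub_F2_23[simp]: "bsub [nc, nc, nr] [nc, nr, nc, nr, nr] F2 2 3 = 0\<^sub>m nr nr"
  unfolding F2_def by (subst bsub_blk) simp_all
lemma bsub_F2_24[simp]: "bsub [nc, nc, nr] [nc, nr, nc, nr, nr] F2 2 4 = 1\<^sub>m nr"
  unfolding F2_def by (subst bsub_blk) simp_all
lemma bsub_G0_00[simp]: "bsub [nc, nr, nc, nr, nr] [nc, nc, nr] G0 0 0 = 1\<^sub>m nc"
  unfolding G0_def by (subst bsub_blk) simp_all
lemma bsub_G0_01[simp]: "bsub [nc, nr, nc, nr, nr] [nc, nc, nr] G0 0 (Suc 0) = 0\<^sub>m nc nc"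
  unfolding G0_def by (subst bsub_blk) simp_all
lemma bsub_G0_02[simp]: "bsub [nc, nr, nc, nr, nr] [nc, nc, nr] G0 0 2 = 0\<^sub>m nc nr"
  unfolding G0_def by (subst bsub_blk) simp_all
lemma bsub_G0_10[simp]: "bsub [nc, nr, nc, nr, nr] [nc, nc, nr] G0 (Suc 0) 0 = 0\<^sub>m nr nc"
  unfolding G0_def by (subst bsub_blk) simp_all
lemma bsub_G0_11[simp]: "bsub [nc, nr, nc, nr, nr] [nc, nc, nr] G0 (Suc 0) (Suc 0) = 0\<^sub>m nr nc"
  unfolding G0_def by (subst bsub_blk) simp_all
lemma bsub_G0_12[simp]: "bsub [nc, nr, nc, nr, nr] [nc, nc, nr] G0 (Suc 0) 2 = 1\<^sub>m nr"
  unfolding G0_def by (subst bsub_blk) simp_all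
lemma bsub_G0_20[simp]: "bsub [nc, nr, nc, nr, nr] [nc, nc, nr] G0 2 0 = 0\<^sub>m nc nc"
  unfolding G0_def by (subst bsub_blk) simp_all
lemma bsub_G0_21[simp]: "bsub [nc, nr, nc, nr, nr] [nc, nc, nr] G0 2 (Suc 0) = 1\<^sub>m nc"
  unfolding G0_def by (subst bsub_blk) simp_all
lemma bsub_G0_22[simp]: "bsub [nc, nr, nc, nr, nr] [nc, nc, nr] G0 2 2 = 0\<^sub>m nc nr"
  unfolding G0_def by (subst bsub_blk) simp_all
lemma bsub_G0_30[simp]: "bsub [nc, nr, nc, nr, nr] [nc, nc, nr] G0 3 0 = 0\<^sub>m nr nc"
  unfolding G0_def by (subst bsub_blk) simp_all
lemma bsub_G0_31[simp]: "bsub [nc, nr, nc, nr, nr] [nc, nc, nr] G0 3 (Suc 0) = 0\<^sub>m nr nc"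
  unfolding G0_def by (subst bsub_blk) simp_all
lemma bsub_G0_32[simp]: "bsub [nc, nr, nc, nr, nr] [nc, nc, nr] G0 3 2 = 0\<^sub>m nr nr"
  unfolding G0_def by (subst bsub_blk) simp_all
lemma bsub_G0_40[simp]: "bsub [nc, nr, nc, nr, nr] [nc, nc, nr] G0 4 0 = 0\<^sub>m nr nc"
  unfolding G0_def by (subst bsub_blk) simp_all
lemma bsub_G0_41[simp]: "bsub [nc, nr, nc, nr, nr] [nc, nc, nr] G0 4 (Suc 0) = \<delta>1"
  unfolding G0_def by (subst bsub_blk) simp_all
lemma bsub_G0_42[simp]: "bsub [nc, nr, nc, nr, nr] [nc, nc, nr] G0 4 2 = 0\<^sub>m nr nr"
  unfolding G0_def by (subst bsub_blk) simp_all
lemma bsub_G1_00[simp]: "bsub [nc, nr, nc, nr, nr] [nc, nc, nr] G1 0 0 = 0\<^sub>m nc nc"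
  unfolding G1_def by (subst bsub_blk) simp_all
lemma bsub_G1_01[simp]: "bsub [nc, nr, nc, nr, nr] [nc, nc, nr] G1 0 (Suc 0) = 0\<^sub>m nc nc"
  unfolding G1_def by (subst bsub_blk) simp_all
lemma bsub_G1_02[simp]: "bsub [nc, nr, nc, nr, nr] [nc, nc, nr] G1 0 2 = 0\<^sub>m nc nr"
  unfolding G1_def by (subst bsub_blk) simp_all
lemma bsub_G1_10[simp]: "bsub [nc, nr, nc, nr, nr] [nc, nc, nr] G1 (Suc 0) 0 = 0\<^sub>m nr nc"
  unfolding G1_def by (subst bsub_blk) simp_all
lemma bsub_G1_11[simp]: "bsub [nc, nr, nc, nr, nr] [nc, nc, nr] G1 (Suc 0) (Suc 0) = 0\<^sub>m nr nc"
  unfolding G1_def by (subst bsub_blk) simp_all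
lemma bsub_G1_12[simp]: "bsub [nc, nr, nc, nr, nr] [nc, nc, nr] G1 (Suc 0) 2 = 0\<^sub>m nr nr"
  unfolding G1_def by (subst bsub_blk) simp_all
lemma bsub_G1_20[simp]: "bsub [nc, nr, nc, nr, nr] [nc, nc, nr] G1 2 0 = 0\<^sub>m nc nc"
  unfolding G1_def by (subst bsub_blk) simp_all
lemma bsub_G1_21[simp]: "bsub [nc, nr, nc, nr, nr] [nc, nc, nr] G1 2 (Suc 0) = 0\<^sub>m nc nc"
  unfolding G1_def by (subst bsub_blk) simp_all
lemma bsub_G1_22[simp]: "bsub [nc, nr, nc, nr, nr] [nc, nc, nr] G1 2 2 = 0\<^sub>m nc nr"
  unfolding G1_def by (subst bsub_blk) simp_all
lemma bsub_G1_30[simp]: "bsub [nc, nr, nc, nr, nr] [nc, nc, nr] G1 3 0 = 0\<^sub>m nr nc"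
  unfolding G1_def by (subst bsub_blk) simp_all
lemma bsub_G1_31[simp]: "bsub [nc, nr, nc, nr, nr] [nc, nc, nr] G1 3 (Suc 0) = 0\<^sub>m nr nc"
  unfolding G1_def by (subst bsub_blk) simp_all
lemma bsub_G1_32[simp]: "bsub [nc, nr, nc, nr, nr] [nc, nc, nr] G1 3 2 = eR"
  unfolding G1_def by (subst bsub_blk) simp_all
lemma bsub_G1_40[simp]: "bsub [nc, nr, nc, nr, nr] [nc, nc, nr] G1 4 0 = - (\<delta>1 * eC)"
  unfolding G1_def by (subst bsub_blk) simp_all
lemma bsub_G1_41[simp]: "bsub [nc, nr, nc, nr, nr] [nc, nc, nr] G1 4 (Suc 0) = 0\<^sub>m nr nc"
  unfolding G1_def by (subst bsub_blk) simp_all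
lemma bsub_G1_42[simp]: "bsub [nc, nr, nc, nr, nr] [nc, nc, nr] G1 4 2 = 0\<^sub>m nr nr"
  unfolding G1_def by (subst bsub_blk) simp_all
lemma bsub_G2_00[simp]: "bsub [nc, nr, nc, nr, nr] [nc, nc, nr] G2 0 0 = 0\<^sub>m nc nc"
  unfolding G2_def by (subst bsub_blk) simp_all
lemma bsub_G2_01[simp]: "bsub [nc, nr, nc, nr, nr] [nc, nc, nr] G2 0 (Suc 0) = 0\<^sub>m nc nc"
  unfolding G2_def by (subst bsub_blk) simp_all
lemma bsub_G2_02[simp]: "bsub [nc, nr, nc, nr, nr] [nc, nc, nr] G2 0 2 = 0\<^sub>m nc nr"
  unfolding G2_def by (subst bsub_blk) simp_all
lemma bsub_G2_10[simp]: "bsub [nc, nr, nc, nr, nr] [nc, nc, nr] G2 (Suc 0) 0 = 0\<^sub>m nr nc"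
  unfolding G2_def by (subst bsub_blk) simp_all
lemma bsub_G2_11[simp]: "bsub [nc, nr, nc, nr, nr] [nc, nc, nr] G2 (Suc 0) (Suc 0) = 0\<^sub>m nr nc"
  unfolding G2_def by (subst bsub_blk) simp_all
lemma bsub_G2_12[simp]: "bsub [nc, nr, nc, nr, nr] [nc, nc, nr] G2 (Suc 0) 2 = 0\<^sub>m nr nr"
  unfolding G2_def by (subst bsub_blk) simp_all
lemma bsub_G2_20[simp]: "bsub [nc, nr, nc, nr, nr] [nc, nc, nr] G2 2 0 = 0\<^sub>m nc nc"
  unfolding G2_def by (subst bsub_blk) simp_all
lemma bsub_G2_21[simp]: "bsub [nc, nr, nc, nr, nr] [nc, nc, nr] G2 2 (Suc 0) = 0\<^sub>m nc nc"
  unfolding G2_def by (subst bsub_blk) simp_all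
lemma bsub_G2_22[simp]: "bsub [nc, nr, nc, nr, nr] [nc, nc, nr] G2 2 2 = 0\<^sub>m nc nr"
  unfolding G2_def by (subst bsub_blk) simp_all
lemma bsub_G2_30[simp]: "bsub [nc, nr, nc, nr, nr] [nc, nc, nr] G2 3 0 = 0\<^sub>m nr nc"
  unfolding G2_def by (subst bsub_blk) simp_all
lemma bsub_G2_31[simp]: "bsub [nc, nr, nc, nr, nr] [nc, nc, nr] G2 3 (Suc 0) = 0\<^sub>m nr nc"
  unfolding G2_def by (subst bsub_blk) simp_all
lemma bsub_G2_32[simp]: "bsub [nc, nr, nc, nr, nr] [nc, nc, nr] G2 3 2 = 0\<^sub>m nr nr"
  unfolding G2_def by (subst bsub_blk) simp_all
lemma bsub_G2_40[simp]: "bsub [nc, nr, nc, nr, nr] [nc, nc, nr] G2 4 0 = 0\<^sub>m nr nc"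
  unfolding G2_def by (subst bsub_blk) simp_all
lemma bsub_G2_41[simp]: "bsub [nc, nr, nc, nr, nr] [nc, nc, nr] G2 4 (Suc 0) = 0\<^sub>m nr nc"
  unfolding G2_def by (subst bsub_blk) simp_all
lemma bsub_G2_42[simp]: "bsub [nc, nr, nc, nr, nr] [nc, nc, nr] G2 4 2 = 1\<^sub>m nr"
  unfolding G2_def by (subst bsub_blk) simp_all
lemma bsub_K20_00[simp]: "bsub [nc, nc, nr] [nc, nc, nr] K20 0 0 = 0\<^sub>m nc nc"
  unfolding K20_def by (subst bsub_blk) simp_all
lemma bsub_K20_01[simp]: "bsub [nc, nc, nr] [nc, nc, nr] K20 0 (Suc 0) = 1\<^sub>m nc"
  unfolding K20_def by (subst bsub_blk) simp_all
lemma bsub_K20_02[simp]: "bsub [nc, nc, nr] [nc, nc, nr] K20 0 2 = 0\<^sub>m nc nr"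
  unfolding K20_def by (subst bsub_blk) simp_all
lemma bsub_K20_10[simp]: "bsub [nc, nc, nr] [nc, nc, nr] K20 (Suc 0) 0 = 0\<^sub>m nc nc"
  unfolding K20_def by (subst bsub_blk) simp_all
lemma bsub_K20_11[simp]: "bsub [nc, nc, nr] [nc, nc, nr] K20 (Suc 0) (Suc 0) = 0\<^sub>m nc nc"
  unfolding K20_def by (subst bsub_blk) simp_all
lemma bsub_K20_12[simp]: "bsub [nc, nc, nr] [nc, nc, nr] K20 (Suc 0) 2 = 0\<^sub>m nc nr"
  unfolding K20_def by (subst bsub_blk) simp_all
lemma bsub_K20_20[simp]: "bsub [nc, nc, nr] [nc, nc, nr] K20 2 0 = 0\<^sub>m nr nc"
  unfolding K20_def by (subst bsub_blk) simp_all
lemma bsub_K20_21[simp]: "bsub [nc, nc, nr] [nc, nc, nr] K20 2 (Suc 0) = 0\<^sub>m nr nc"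
  unfolding K20_def by (subst bsub_blk) simp_all
lemma bsub_K20_22[simp]: "bsub [nc, nc, nr] [nc, nc, nr] K20 2 2 = 0\<^sub>m nr nr"
  unfolding K20_def by (subst bsub_blk) simp_all
lemma bsub_K21_00[simp]: "bsub [nc, nc, nr] [nc, nc, nr] K21 0 0 = - eC"
  unfolding K21_def by (subst bsub_blk) simp_all
lemma bsub_K21_01[simp]: "bsub [nc, nc, nr] [nc, nc, nr] K21 0 (Suc 0) = 0\<^sub>m nc nc"
  unfolding K21_def by (subst bsub_blk) simp_all
lemma bsub_K21_02[simp]: "bsub [nc, nc, nr] [nc, nc, nr] K21 0 2 = 0\<^sub>m nc nr"
  unfolding K21_def by (subst bsub_blk) simp_all
lemma bsub_K21_10[simp]: "bsub [nc, nc, nr] [nc, nc, nr] K21 (Suc 0) 0 = 0\<^sub>m nc nc"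
  unfolding K21_def by (subst bsub_blk) simp_all
lemma bsub_K21_11[simp]: "bsub [nc, nc, nr] [nc, nc, nr] K21 (Suc 0) (Suc 0) = eC"
  unfolding K21_def by (subst bsub_blk) simp_all
lemma bsub_K21_12[simp]: "bsub [nc, nc, nr] [nc, nc, nr] K21 (Suc 0) 2 = 0\<^sub>m nc nr"
  unfolding K21_def by (subst bsub_blk) simp_all
lemma bsub_K21_20[simp]: "bsub [nc, nc, nr] [nc, nc, nr] K21 2 0 = 0\<^sub>m nr nc"
  unfolding K21_def by (subst bsub_blk) simp_all
lemma bsub_K21_21[simp]: "bsub [nc, nc, nr] [nc, nc, nr] K21 2 (Suc 0) = 0\<^sub>m nr nc"
  unfolding K21_def by (subst bsub_blk) simp_all
lemma bsub_K21_22[simp]: "bsub [nc, nc, nr] [nc, nc, nr] K21 2 2 = 0\<^sub>m nr nr"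
  unfolding K21_def by (subst bsub_blk) simp_all

lemma bsub_mult_XXX[simp]:
  assumes "dim_row A = nc + (nc + nr)" "dim_col A = nc + (nc + nr)" "dim_row B = nc + (nc + nr)" "dim_col B = nc + (nc + nr)" "i < length [nc, nc, nr]" "j < length [nc, nc, nr]"
  shows "bsub [nc, nc, nr] [nc, nc, nr] (A * B) i j = msum (Suc (Suc 0)) (\<lambda>l. bsub [nc, nc, nr] [nc, nc, nr] A i l * bsub [nc, nc, nr] [nc, nc, nr] B l j)"
proof -
  have "bsub [nc, nc, nr] [nc, nc, nr] (A * B) i j = msum (length [nc, nc, nr] - 1) (\<lambda>l. bsub [nc, nc, nr] [nc, nc, nr] A i l * bsub [nc, nc, nr] [nc, nc, nr] B l j)"
    by (rule bsub_mult) (use assms in \<open>auto intro!: carrier_matI\<close>)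
  then show ?thesis by simp
qed
lemma bsub_mult_XXS[simp]:
  assumes "dim_row A = nc + (nc + nr)" "dim_col A = nc + (nr + (nc + (nr + nr)))" "dim_row B = nc + (nr + (nc + (nr + nr)))" "dim_col B = nc + (nc + nr)" "i < length [nc, nc, nr]" "j < length [nc, nc, nr]"
  shows "bsub [nc, nc, nr] [nc, nc, nr] (A * B) i j = msum (Suc (Suc (Suc (Suc 0)))) (\<lambda>l. bsub [nc, nc, nr] [nc, nr, nc, nr, nr] A i l * bsub [nc, nr, nc, nr, nr] [nc, nc, nr] B l j)"
proof -
  have "bsub [nc, nc, nr] [nc, nc, nr] (A * B) i j = msum (length [nc, nr, nc, nr, nr] - 1) (\<lambda>l. bsub [nc, nc, nr] [nc, nr, nc, nr, nr] A i l * bsub [nc, nr, nc, nr, nr] [nc, nc, nr] B l j)"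
    by (rule bsub_mult) (use assms in \<open>auto intro!: carrier_matI\<close>)
  then show ?thesis by simp
qed
lemma bsub_mult_XSX[simp]:
  assumes "dim_row A = nc + (nc + nr)" "dim_col A = nc + (nc + nr)" "dim_row B = nc + (nc + nr)" "dim_col B = nc + (nr + (nc + (nr + nr)))" "i < length [nc, nc, nr]" "j < length [nc, nr, nc, nr, nr]"
  shows "bsub [nc, nc, nr] [nc, nr, nc, nr, nr] (A * B) i j = msum (Suc (Suc 0)) (\<lambda>l. bsub [nc, nc, nr] [nc, nc, nr] A i l * bsub [nc, nc, nr] [nc, nr, nc, nr, nr] B l j)"
proof -
  have "bsub [nc, nc, nr] [nc, nr, nc, nr, nr] (A * B) i j = msum (length [nc, nc, nr] - 1) (\<lambda>l. bsub [nc, nc, nr] [nc, nc, nr] A i l * bsub [nc, nc, nr] [nc, nr, nc, nr, nr] B l j)"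
    by (rule bsub_mult) (use assms in \<open>auto intro!: carrier_matI\<close>)
  then show ?thesis by simp
qed
lemma bsub_mult_XSS[simp]:
  assumes "dim_row A = nc + (nc + nr)" "dim_col A = nc + (nr + (nc + (nr + nr)))" "dim_row B = nc + (nr + (nc + (nr + nr)))" "dim_col B = nc + (nr + (nc + (nr + nr)))" "i < length [nc, nc, nr]" "j < length [nc, nr, nc, nr, nr]"
  shows "bsub [nc, nc, nr] [nc, nr, nc, nr, nr] (A * B) i j = msum (Suc (Suc (Suc (Suc 0)))) (\<lambda>l. bsub [nc, nc, nr] [nc, nr, nc, nr, nr] A i l * bsub [nc, nr, nc, nr, nr] [nc, nr, nc, nr, nr] B l j)"
proof -
  have "bsub [nc, nc, nr] [nc, nr, nc, nr, nr] (A * B) i j = msum (length [nc, nr, nc, nr, nr] - 1) (\<lambda>l. bsub [nc, nc, nr] [nc, nr, nc, nr, nr] A i l * bsub [nc, nr, nc, nr, nr] [nc, nr, nc, nr, nr] B l j)"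
    by (rule bsub_mult) (use assms in \<open>auto intro!: carrier_matI\<close>)
  then show ?thesis by simp
qed
lemma bsub_mult_SXX[simp]:
  assumes "dim_row A = nc + (nr + (nc + (nr + nr)))" "dim_col A = nc + (nc + nr)" "dim_row B = nc + (nc + nr)" "dim_col B = nc + (nc + nr)" "i < length [nc, nr, nc, nr, nr]" "j < length [nc, nc, nr]"
  shows "bsub [nc, nr, nc, nr, nr] [nc, nc, nr] (A * B) i j = msum (Suc (Suc 0)) (\<lambda>l. bsub [nc, nr, nc, nr, nr] [nc, nc, nr] A i l * bsub [nc, nc, nr] [nc, nc, nr] B l j)"
proof -
  have "bsub [nc, nr, nc, nr, nr] [nc, nc, nr] (A * B) i j = msum (length [nc, nc, nr] - 1) (\<lambda>l. bsub [nc, nr, nc, nr, nr] [nc, nc, nr] A i l * bsub [nc, nc, nr] [nc, nc, nr] B l j)"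
    by (rule bsub_mult) (use assms in \<open>auto intro!: carrier_matI\<close>)
  then show ?thesis by simp
qed
lemma bsub_mult_SXS[simp]:
  assumes "dim_row A = nc + (nr + (nc + (nr + nr)))" "dim_col A = nc + (nr + (nc + (nr + nr)))" "dim_row B = nc + (nr + (nc + (nr + nr)))" "dim_col B = nc + (nc + nr)" "i < length [nc, nr, nc, nr, nr]" "j < length [nc, nc, nr]"
  shows "bsub [nc, nr, nc, nr, nr] [nc, nc, nr] (A * B) i j = msum (Suc (Suc (Suc (Suc 0)))) (\<lambda>l. bsub [nc, nr, nc, nr, nr] [nc, nr, nc, nr, nr] A i l * bsub [nc, nr, nc, nr, nr] [nc, nc, nr] B l j)"
proof -
  have "bsub [nc, nr, nc, nr, nr] [nc, nc, nr] (A * B) i j = msum (length [nc, nr, nc, nr, nr] - 1) (\<lambda>l. bsub [nc, nr, nc, nr, nr] [nc, nr, nc, nr, nr] A i l * bsub [nc, nr, nc, nr, nr] [nc, nc, nr] B l j)"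
    by (rule bsub_mult) (use assms in \<open>auto intro!: carrier_matI\<close>)
  then show ?thesis by simp
qed
lemma bsub_mult_SSX[simp]:
  assumes "dim_row A = nc + (nr + (nc + (nr + nr)))" "dim_col A = nc + (nc + nr)" "dim_row B = nc + (nc + nr)" "dim_col B = nc + (nr + (nc + (nr + nr)))" "i < length [nc, nr, nc, nr, nr]" "j < length [nc, nr, nc, nr, nr]"
  shows "bsub [nc, nr, nc, nr, nr] [nc, nr, nc, nr, nr] (A * B) i j = msum (Suc (Suc 0)) (\<lambda>l. bsub [nc, nr, nc, nr, nr] [nc, nc, nr] A i l * bsub [nc, nc, nr] [nc, nr, nc, nr, nr] B l j)"
proof -
  have "bsub [nc, nr, nc, nr, nr] [nc, nr, nc, nr, nr] (A * B) i j = msum (length [nc, nc, nr] - 1) (\<lambda>l. bsub [nc, nr, nc, nr, nr] [nc, nc, nr] A i l * bsub [nc, nc, nr] [nc, nr, nc, nr, nr] B l j)"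
    by (rule bsub_mult) (use assms in \<open>auto intro!: carrier_matI\<close>)
  then show ?thesis by simp
qed
lemma bsub_mult_SSS[simp]:
  assumes "dim_row A = nc + (nr + (nc + (nr + nr)))" "dim_col A = nc + (nr + (nc + (nr + nr)))" "dim_row B = nc + (nr + (nc + (nr + nr)))" "dim_col B = nc + (nr + (nc + (nr + nr)))" "i < length [nc, nr, nc, nr, nr]" "j < length [nc, nr, nc, nr, nr]"
  shows "bsub [nc, nr, nc, nr, nr] [nc, nr, nc, nr, nr] (A * B) i j = msum (Suc (Suc (Suc (Suc 0)))) (\<lambda>l. bsub [nc, nr, nc, nr, nr] [nc, nr, nc, nr, nr] A i l * bsub [nc, nr, nc, nr, nr] [nc, nr, nc, nr, nr] B l j)"
proof -
  have "bsub [nc, nr, nc, nr, nr] [nc, nr, nc, nr, nr] (A * B) i j = msum (length [nc, nr, nc, nr, nr] - 1) (\<lambda>l. bsub [nc, nr, nc, nr, nr] [nc, nr, nc, nr, nr] A i l * bsub [nc, nr, nc, nr, nr] [nc, nr, nc, nr, nr] B l j)"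
    by (rule bsub_mult) (use assms in \<open>auto intro!: carrier_matI\<close>)
  then show ?thesis by simp
qed

lemma XF0: "dif X * F0 = F0 * dif S"
  apply (rule bsub_eq_XS)
  apply (simp_all)
  done

end


lemma smult_one_mat'[simp]: "(1::'a::comm_ring_1) \<cdot>\<^sub>m A = A"
  by (rule eq_matI) auto
lemma smult_zero_mat'[simp]: "(0::'a::comm_ring_1) \<cdot>\<^sub>m A = 0\<^sub>m (dim_row A) (dim_col A)"
  by (rule eq_matI) auto

lemma O_degs[simp]: "degs (O_minus1 :: 'a::comm_ring_1 cxchi) = [-2, -1, 0]"
  by (simp add: O_minus1_def S_tot_def shift_degs_def)

lemma O_dif: "dif (O_minus1 :: 'a::comm_ring_1 cxchi) = mat 3 3 (\<lambda>(i, j). if i = 1 \<and> j = 2 then 1 else 0)"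
  unfolding O_minus1_def S_tot_def Let_def
  by (rule eq_matI) (auto simp: block3_def row_blocks_def append_rows_def less_Suc_eq numeral_eq_Suc)

lemma O_chi: "chi (O_minus1 :: 'a::comm_ring_1 cxchi) = mat 3 3 (\<lambda>(i, j). if i = 1 \<and> j = 0 then 1 else 0)"
  unfolding O_minus1_def S_tot_def Let_def
  by (rule eq_matI) (auto simp: block3_def row_blocks_def append_rows_def less_Suc_eq numeral_eq_Suc)

lemma kron_dims[simp]: "dim_row (kron A B) = dim_row A * dim_row B" "dim_col (kron A B) = dim_col A * dim_col B"
  by (simp_all add: kron_def)

context Sc begin

abbreviation "T \<equiv> tensor_cx X O_minus1"

lemma dif_T: "dif T = kron (dif X) (1\<^sub>m 3) + kron (sign_mat (degs X)) (dif O_minus1)"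
  by (simp add: tensor_cx_def eval_nat_numeral)
lemma chi_T: "chi T = kron (chi X) (1\<^sub>m 3) + kron (sign_mat (degs X)) (chi O_minus1)"
  by (simp add: tensor_cx_def eval_nat_numeral)

lemma DT_dims[simp]: "dim_row (dif T) = N * 3" "dim_col (dif T) = N * 3"
  by (simp_all add: dif_T O_dif)
lemma CT_dims[simp]: "dim_row (chi T) = N * 3" "dim_col (chi T) = N * 3"
  by (simp_all add: chi_T O_chi)
lemma degs_T: "degs T = tdegs (degs X) [-2, -1, 0]"
  by (simp add: tensor_cx_def tdegs_def)

lemma xt_DT_00[simp]: "xt 3 3 N N (dif T) 0 0 = dif X"
  unfolding dif_T by (simp add: xt_add xt_kron O_dif carrier_mat_iff)
lemma xt_CT_00[simp]: "xt 3 3 N N (chi T) 0 0 = chi X"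
  unfolding chi_T by (simp add: xt_add xt_kron O_chi carrier_mat_iff)
lemma xt_DT_01[simp]: "xt 3 3 N N (dif T) 0 (Suc 0) = 0\<^sub>m N N"
  unfolding dif_T by (simp add: xt_add xt_kron O_dif carrier_mat_iff)
lemma xt_CT_01[simp]: "xt 3 3 N N (chi T) 0 (Suc 0) = 0\<^sub>m N N"
  unfolding chi_T by (simp add: xt_add xt_kron O_chi carrier_mat_iff)
lemma xt_DT_02[simp]: "xt 3 3 N N (dif T) 0 2 = 0\<^sub>m N N"
  unfolding dif_T by (simp add: xt_add xt_kron O_dif carrier_mat_iff)
lemma xt_CT_02[simp]: "xt 3 3 N N (chi T) 0 2 = 0\<^sub>m N N"
  unfolding chi_T by (simp add: xt_add xt_kron O_chi carrier_mat_iff)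
lemma xt_DT_10[simp]: "xt 3 3 N N (dif T) (Suc 0) 0 = 0\<^sub>m N N"
  unfolding dif_T by (simp add: xt_add xt_kron O_dif carrier_mat_iff)
lemma xt_CT_10[simp]: "xt 3 3 N N (chi T) (Suc 0) 0 = sign_mat (degs X)"
  unfolding chi_T by (simp add: xt_add xt_kron O_chi carrier_mat_iff)
lemma xt_DT_11[simp]: "xt 3 3 N N (dif T) (Suc 0) (Suc 0) = dif X"
  unfolding dif_T by (simp add: xt_add xt_kron O_dif carrier_mat_iff)
lemma xt_CT_11[simp]: "xt 3 3 N N (chi T) (Suc 0) (Suc 0) = chi X"
  unfolding chi_T by (simp add: xt_add xt_kron O_chi carrier_mat_iff)
lemma xt_DT_12[simp]: "xt 3 3 N N (dif T) (Suc 0) 2 = sign_mat (degs X)"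
  unfolding dif_T by (simp add: xt_add xt_kron O_dif carrier_mat_iff)
lemma xt_CT_12[simp]: "xt 3 3 N N (chi T) (Suc 0) 2 = 0\<^sub>m N N"
  unfolding chi_T by (simp add: xt_add xt_kron O_chi carrier_mat_iff)
lemma xt_DT_20[simp]: "xt 3 3 N N (dif T) 2 0 = 0\<^sub>m N N"
  unfolding dif_T by (simp add: xt_add xt_kron O_dif carrier_mat_iff)
lemma xt_CT_20[simp]: "xt 3 3 N N (chi T) 2 0 = 0\<^sub>m N N"
  unfolding chi_T by (simp add: xt_add xt_kron O_chi carrier_mat_iff)
lemma xt_DT_21[simp]: "xt 3 3 N N (dif T) 2 (Suc 0) = 0\<^sub>m N N"
  unfolding dif_T by (simp add: xt_add xt_kron O_dif carrier_mat_iff)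
lemma xt_CT_21[simp]: "xt 3 3 N N (chi T) 2 (Suc 0) = 0\<^sub>m N N"
  unfolding chi_T by (simp add: xt_add xt_kron O_chi carrier_mat_iff)
lemma xt_DT_22[simp]: "xt 3 3 N N (dif T) 2 2 = dif X"
  unfolding dif_T by (simp add: xt_add xt_kron O_dif carrier_mat_iff)
lemma xt_CT_22[simp]: "xt 3 3 N N (chi T) 2 2 = chi X"
  unfolding chi_T by (simp add: xt_add xt_kron O_chi carrier_mat_iff)

end


context Sc begin

lemma xt_zero33[simp]: "k = N * 3 \<Longrightarrow> i < 3 \<Longrightarrow> j < 3 \<Longrightarrow> xt 3 3 N N (0\<^sub>m k k) i j = 0\<^sub>m N N"
  using xt_zero[of i 3 j 3 N N] by simp
lemma xt_one33[simp]: "k = N * 3 \<Longrightarrow> i < 3 \<Longrightarrow> j < 3 \<Longrightarrow> xt 3 3 N N (1\<^sub>m k) i j = (if i = j then 1\<^sub>m N else 0\<^sub>m N N)"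
  using xt_one[of i 3 j N] by simp

lemma msum_1[simp]: "msum 0 f = f 0" by (simp add: msum.simps)

definition "F = ilv 3 (Suc 0) N M (\<lambda>i j. if i = 0 then F0 else if i = Suc 0 then F1 else F2)"
definition "G = ilv (Suc 0) 3 M N (\<lambda>i j. if j = 0 then G0 else if j = Suc 0 then G1 else G2)"
definition "K = ilv 3 3 N N (\<lambda>i j. if i = 2 \<and> j = 0 then K20 else if i = 2 \<and> j = Suc 0 then K21 else 0\<^sub>m N N)"

lemma F_dims[simp]: "dim_row F = N * 3" "dim_col F = M" by (simp_all add: F_def)
lemma G_dims[simp]: "dim_row G = M" "dim_col G = N * 3" by (simp_all add: G_def)
lemma K_dims[simp]: "dim_row K = N * 3" "dim_col K = N * 3" by (simp_all add: K_def)

lemma xt_F_0[simp]: "xt 3 (Suc 0) N M F 0 0 = F0"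
  unfolding F_def by (subst xt_ilv) (auto simp: carrier_mat_iff)
lemma xt_G_0[simp]: "xt (Suc 0) 3 M N G 0 0 = G0"
  unfolding G_def by (subst xt_ilv) (auto simp: carrier_mat_iff)
lemma xt_K_00[simp]: "xt 3 3 N N K 0 0 = 0\<^sub>m N N"
  unfolding K_def by (subst xt_ilv) (auto simp: carrier_mat_iff)
lemma xt_K_01[simp]: "xt 3 3 N N K 0 (Suc 0) = 0\<^sub>m N N"
  unfolding K_def by (subst xt_ilv) (auto simp: carrier_mat_iff)
lemma xt_K_02[simp]: "xt 3 3 N N K 0 2 = 0\<^sub>m N N"
  unfolding K_def by (subst xt_ilv) (auto simp: carrier_mat_iff)
lemma xt_F_1[simp]: "xt 3 (Suc 0) N M F (Suc 0) 0 = F1"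
  unfolding F_def by (subst xt_ilv) (auto simp: carrier_mat_iff)
lemma xt_G_1[simp]: "xt (Suc 0) 3 M N G 0 (Suc 0) = G1"
  unfolding G_def by (subst xt_ilv) (auto simp: carrier_mat_iff)
lemma xt_K_10[simp]: "xt 3 3 N N K (Suc 0) 0 = 0\<^sub>m N N"
  unfolding K_def by (subst xt_ilv) (auto simp: carrier_mat_iff)
lemma xt_K_11[simp]: "xt 3 3 N N K (Suc 0) (Suc 0) = 0\<^sub>m N N"
  unfolding K_def by (subst xt_ilv) (auto simp: carrier_mat_iff)
lemma xt_K_12[simp]: "xt 3 3 N N K (Suc 0) 2 = 0\<^sub>m N N"
  unfolding K_def by (subst xt_ilv) (auto simp: carrier_mat_iff)
lemma xt_F_2[simp]: "xt 3 (Suc 0) N M F 2 0 = F2"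
  unfolding F_def by (subst xt_ilv) (auto simp: carrier_mat_iff)
lemma xt_G_2[simp]: "xt (Suc 0) 3 M N G 0 2 = G2"
  unfolding G_def by (subst xt_ilv) (auto simp: carrier_mat_iff)
lemma xt_K_20[simp]: "xt 3 3 N N K 2 0 = K20"
  unfolding K_def by (subst xt_ilv) (auto simp: carrier_mat_iff)
lemma xt_K_21[simp]: "xt 3 3 N N K 2 (Suc 0) = K21"
  unfolding K_def by (subst xt_ilv) (auto simp: carrier_mat_iff)
lemma xt_K_22[simp]: "xt 3 3 N N K 2 2 = 0\<^sub>m N N"
  unfolding K_def by (subst xt_ilv) (auto simp: carrier_mat_iff)
lemma xt_mult_333[simp]:
  assumes "dim_row A = N * 3" "dim_col A = N * 3" "dim_row B = N * 3" "dim_col B = N * 3" "i < 3" "j < 3"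
  shows "xt 3 3 N N (A * B) i j = msum (Suc (Suc 0)) (\<lambda>l. xt 3 3 N N A i l * xt 3 3 N N B l j)"
proof -
  have "xt 3 3 N N (A * B) i j = msum (3 - 1) (\<lambda>l. xt 3 3 N N A i l * xt 3 3 N N B l j)"
    by (rule xt_mult) (use assms in \<open>auto intro!: carrier_matI\<close>)
  then show ?thesis by (simp add: numeral_eq_Suc)
qed
lemma xt_mult_331[simp]:
  assumes "dim_row A = N * 3" "dim_col A = M" "dim_row B = M" "dim_col B = N * 3" "i < 3" "j < 3"
  shows "xt 3 3 N N (A * B) i j = msum (0) (\<lambda>l. xt 3 (Suc 0) N M A i l * xt (Suc 0) 3 M N B l j)"
proof -
  have "xt 3 3 N N (A * B) i j = msum (Suc 0 - 1) (\<lambda>l. xt 3 (Suc 0) N M A i l * xt (Suc 0) 3 M N B l j)"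
    by (rule xt_mult) (use assms in \<open>auto intro!: carrier_matI\<close>)
  then show ?thesis by (simp add: numeral_eq_Suc)
qed
lemma xt_mult_313[simp]:
  assumes "dim_row A = N * 3" "dim_col A = N * 3" "dim_row B = N * 3" "dim_col B = M" "i < 3" "j < 1"
  shows "xt 3 (Suc 0) N M (A * B) i j = msum (Suc (Suc 0)) (\<lambda>l. xt 3 3 N N A i l * xt 3 (Suc 0) N M B l j)"
proof -
  have "xt 3 (Suc 0) N M (A * B) i j = msum (3 - 1) (\<lambda>l. xt 3 3 N N A i l * xt 3 (Suc 0) N M B l j)"
    by (rule xt_mult) (use assms in \<open>auto intro!: carrier_matI\<close>)
  then show ?thesis by (simp add: numeral_eq_Suc)
qed
lemma xt_mult_311[simp]:
  assumes "dim_row A = N * 3" "dim_col A = M" "dim_row B = M" "dim_col B = M" "i < 3" "j < 1"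
  shows "xt 3 (Suc 0) N M (A * B) i j = msum (0) (\<lambda>l. xt 3 (Suc 0) N M A i l * xt (Suc 0) (Suc 0) M M B l j)"
proof -
  have "xt 3 (Suc 0) N M (A * B) i j = msum (Suc 0 - 1) (\<lambda>l. xt 3 (Suc 0) N M A i l * xt (Suc 0) (Suc 0) M M B l j)"
    by (rule xt_mult) (use assms in \<open>auto intro!: carrier_matI\<close>)
  then show ?thesis by (simp add: numeral_eq_Suc)
qed
lemma xt_mult_133[simp]:
  assumes "dim_row A = M" "dim_col A = N * 3" "dim_row B = N * 3" "dim_col B = N * 3" "i < 1" "j < 3"
  shows "xt (Suc 0) 3 M N (A * B) i j = msum (Suc (Suc 0)) (\<lambda>l. xt (Suc 0) 3 M N A i l * xt 3 3 N N B l j)"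
proof -
  have "xt (Suc 0) 3 M N (A * B) i j = msum (3 - 1) (\<lambda>l. xt (Suc 0) 3 M N A i l * xt 3 3 N N B l j)"
    by (rule xt_mult) (use assms in \<open>auto intro!: carrier_matI\<close>)
  then show ?thesis by (simp add: numeral_eq_Suc)
qed
lemma xt_mult_131[simp]:
  assumes "dim_row A = M" "dim_col A = M" "dim_row B = M" "dim_col B = N * 3" "i < 1" "j < 3"
  shows "xt (Suc 0) 3 M N (A * B) i j = msum (0) (\<lambda>l. xt (Suc 0) (Suc 0) M M A i l * xt (Suc 0) 3 M N B l j)"
proof -
  have "xt (Suc 0) 3 M N (A * B) i j = msum (Suc 0 - 1) (\<lambda>l. xt (Suc 0) (Suc 0) M M A i l * xt (Suc 0) 3 M N B l j)"
    by (rule xt_mult) (use assms in \<open>auto intro!: carrier_matI\<close>)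
  then show ?thesis by (simp add: numeral_eq_Suc)
qed
lemma xt_mult_113[simp]:
  assumes "dim_row A = M" "dim_col A = N * 3" "dim_row B = N * 3" "dim_col B = M" "i < 1" "j < 1"
  shows "xt (Suc 0) (Suc 0) M M (A * B) i j = msum (Suc (Suc 0)) (\<lambda>l. xt (Suc 0) 3 M N A i l * xt 3 (Suc 0) N M B l j)"
proof -
  have "xt (Suc 0) (Suc 0) M M (A * B) i j = msum (3 - 1) (\<lambda>l. xt (Suc 0) 3 M N A i l * xt 3 (Suc 0) N M B l j)"
    by (rule xt_mult) (use assms in \<open>auto intro!: carrier_matI\<close>)
  then show ?thesis by (simp add: numeral_eq_Suc)
qed
lemma xt_mult_111[simp]:
  assumes "dim_row A = M" "dim_col A = M" "dim_row B = M" "dim_col B = M" "i < 1" "j < 1"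
  shows "xt (Suc 0) (Suc 0) M M (A * B) i j = msum (0) (\<lambda>l. xt (Suc 0) (Suc 0) M M A i l * xt (Suc 0) (Suc 0) M M B l j)"
proof -
  have "xt (Suc 0) (Suc 0) M M (A * B) i j = msum (Suc 0 - 1) (\<lambda>l. xt (Suc 0) (Suc 0) M M A i l * xt (Suc 0) (Suc 0) M M B l j)"
    by (rule xt_mult) (use assms in \<open>auto intro!: carrier_matI\<close>)
  then show ?thesis by (simp add: numeral_eq_Suc)
qed

lemma xt11[simp]: "dim_row A = M \<Longrightarrow> dim_col A = M \<Longrightarrow> xt (Suc 0) (Suc 0) M M A 0 0 = A"
  unfolding xt_def by (rule eq_matI) auto

lemma xt_eq_31:
  assumes "dim_row A = N * 3" "dim_col A = M * 1" "dim_row B = N * 3" "dim_col B = M * 1"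
  "xt 3 (Suc 0) N M A 0 0 = xt 3 (Suc 0) N M B 0 0" "xt 3 (Suc 0) N M A (Suc 0) 0 = xt 3 (Suc 0) N M B (Suc 0) 0" "xt 3 (Suc 0) N M A 2 0 = xt 3 (Suc 0) N M B 2 0"
  shows "A = B"
proof (rule xt_eq[where a=3 and b="Suc 0" and n="N" and m="M"])
  fix i j :: nat assume "i < 3" "j < Suc 0"
  then show "xt 3 (Suc 0) N M A i j = xt 3 (Suc 0) N M B i j"
    using assms(5-) by (auto simp: less_Suc_eq numeral_eq_Suc)
qed (use assms in \<open>auto intro!: carrier_matI\<close>)

lemma xt_eq_13:
  assumes "dim_row A = M * 1" "dim_col A = N * 3" "dim_row B = M * 1" "dim_col B = N * 3"
  "xt (Suc 0) 3 M N A 0 0 = xt (Suc 0) 3 M N B 0 0" "xt (Suc 0) 3 M N A 0 (Suc 0) = xt (Suc 0) 3 M N B 0 (Suc 0)" "xt (Suc 0) 3 M N A 0 2 = xt (Suc 0) 3 M N B 0 2"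
  shows "A = B"
proof (rule xt_eq[where a="Suc 0" and b=3 and n="M" and m="N"])
  fix i j :: nat assume "i < Suc 0" "j < 3"
  then show "xt (Suc 0) 3 M N A i j = xt (Suc 0) 3 M N B i j"
    using assms(5-) by (auto simp: less_Suc_eq numeral_eq_Suc)
qed (use assms in \<open>auto intro!: carrier_matI\<close>)

lemma xt_eq_33:
  assumes "dim_row A = N * 3" "dim_col A = N * 3" "dim_row B = N * 3" "dim_col B = N * 3"
  "xt 3 3 N N A 0 0 = xt 3 3 N N B 0 0" "xt 3 3 N N A 0 (Suc 0) = xt 3 3 N N B 0 (Suc 0)" "xt 3 3 N N A 0 2 = xt 3 3 N N B 0 2" "xt 3 3 N N A (Suc 0) 0 = xt 3 3 N N B (Suc 0) 0" "xt 3 3 N N A (Suc 0) (Suc 0) = xt 3 3 N N B (Suc 0) (Suc 0)" "xt 3 3 N N A (Suc 0) 2 = xt 3 3 N N B (Suc 0) 2" "xt 3 3 N N A 2 0 = xt 3 3 N N B 2 0" "xt 3 3 N N A 2 (Suc 0) = xt 3 3 N N B 2 (Suc 0)" "xt 3 3 N N A 2 2 = xt 3 3 N N B 2 2"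
  shows "A = B"
proof (rule xt_eq[where a=3 and b=3 and n="N" and m="N"])
  fix i j :: nat assume "i < 3" "j < 3"
  then show "xt 3 3 N N A i j = xt 3 3 N N B i j"
    using assms(5-) by (auto simp: less_Suc_eq numeral_eq_Suc)
qed (use assms in \<open>auto intro!: carrier_matI\<close>)



lemma minus_zero_mat'[simp]: "dim_row A = n \<Longrightarrow> dim_col A = m \<Longrightarrow> A - 0\<^sub>m n m = (A :: 'b::group_add mat)"
  by (rule eq_matI) auto

end


context Sc begin

declare bsub_add[simp] bsub_minus[simp] bsub_uminus[simp]

lemma bsub_one_X[simp]: "i < 3 \<Longrightarrow> j < 3 \<Longrightarrow> bsub [nc, nc, nr] [nc, nc, nr] (1\<^sub>m (nc + (nc + nr))) i j = (if i = j then 1\<^sub>m ([nc, nc, nr] ! i) else 0\<^sub>m ([nc, nc, nr] ! i) ([nc, nc, nr] ! j))"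
  using bsub_one[of i "[nc, nc, nr]" j] by simp
lemma bsub_zero_XX[simp]: "i < 3 \<Longrightarrow> j < 3 \<Longrightarrow> bsub [nc, nc, nr] [nc, nc, nr] (0\<^sub>m (nc + (nc + nr)) (nc + (nc + nr))) i j = 0\<^sub>m ([nc, nc, nr] ! i) ([nc, nc, nr] ! j)"
  using bsub_zero[of i "[nc, nc, nr]" j "[nc, nc, nr]"] by simp
lemma bsub_zero_XS[simp]: "i < 3 \<Longrightarrow> j < 5 \<Longrightarrow> bsub [nc, nc, nr] [nc, nr, nc, nr, nr] (0\<^sub>m (nc + (nc + nr)) (nc + (nr + (nc + (nr + nr))))) i j = 0\<^sub>m ([nc, nc, nr] ! i) ([nc, nr, nc, nr, nr] ! j)"
  using bsub_zero[of i "[nc, nc, nr]" j "[nc, nr, nc, nr, nr]"] by simp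
lemma bsub_one_S[simp]: "i < 5 \<Longrightarrow> j < 5 \<Longrightarrow> bsub [nc, nr, nc, nr, nr] [nc, nr, nc, nr, nr] (1\<^sub>m (nc + (nr + (nc + (nr + nr))))) i j = (if i = j then 1\<^sub>m ([nc, nr, nc, nr, nr] ! i) else 0\<^sub>m ([nc, nr, nc, nr, nr] ! i) ([nc, nr, nc, nr, nr] ! j))"
  using bsub_one[of i "[nc, nr, nc, nr, nr]" j] by simp
lemma bsub_zero_SX[simp]: "i < 5 \<Longrightarrow> j < 3 \<Longrightarrow> bsub [nc, nr, nc, nr, nr] [nc, nc, nr] (0\<^sub>m (nc + (nr + (nc + (nr + nr)))) (nc + (nc + nr))) i j = 0\<^sub>m ([nc, nr, nc, nr, nr] ! i) ([nc, nc, nr] ! j)"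
  using bsub_zero[of i "[nc, nr, nc, nr, nr]" j "[nc, nc, nr]"] by simp
lemma bsub_zero_SS[simp]: "i < 5 \<Longrightarrow> j < 5 \<Longrightarrow> bsub [nc, nr, nc, nr, nr] [nc, nr, nc, nr, nr] (0\<^sub>m (nc + (nr + (nc + (nr + nr)))) (nc + (nr + (nc + (nr + nr))))) i j = 0\<^sub>m ([nc, nr, nc, nr, nr] ! i) ([nc, nr, nc, nr, nr] ! j)"
  using bsub_zero[of i "[nc, nr, nc, nr, nr]" j "[nc, nr, nc, nr, nr]"] by simp

lemma DD: "dif X * dif X = 0\<^sub>m N N"
  using SC by (simp add: is_S_complex_def Let_def)

lemma gDX: "graded_map (concat [dc, shift_degs (-1) dc, dr]) (concat [dc, shift_degs (-1) dc, dr]) (-1) (dif X)"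
  using SC unfolding degs_X[symmetric] by (simp add: is_S_complex_def Let_def)

lemma sign_shift: "sign_mat (shift_degs (-1) dc) = - eC"
  unfolding eC_def sign_mat_def mat_diag_def shift_degs_def by (rule eq_matI) auto

lemma g_d: "graded_map dc dc (-1) d"
  using graded_sub[OF gDX, of 0 0] by simp
lemma g_v: "graded_map dc (shift_degs (-1) dc) (-1) v"
  using graded_sub[OF gDX, of "Suc 0" 0] by simp
lemma g_d2: "graded_map dr (shift_degs (-1) dc) (-1) \<delta>2"
  using graded_sub[OF gDX, of "Suc 0" 2] by simp
lemma g_d1: "graded_map dc dr (-1) \<delta>1"
  using graded_sub[OF gDX, of 2 0] by simp
lemma g_r: "graded_map dr dr (-1) r"
  using graded_sub[OF gDX, of 2 2] by simp

lemma eC_d: "eC * d = - (d * eC)"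
  using sign_comm[OF g_d] by (simp add: eC_def)
lemma eR_r: "eR * r = - (r * eR)"
  using sign_comm[OF g_r] by (simp add: eR_def)
lemma eR_d1: "eR * \<delta>1 = - (\<delta>1 * eC)"
  using sign_comm[OF g_d1] by (simp add: eR_def eC_def)
lemma eC_v: "eC * v = v * eC"
  using sign_comm[OF g_v] by (simp add: sign_shift eC_def)
lemma eC_d2: "eC * \<delta>2 = \<delta>2 * eR"
  using sign_comm[OF g_d2] by (simp add: sign_shift eC_def eR_def)
lemma eC_sq: "eC * eC = 1\<^sub>m nc"
  unfolding eC_def by (rule sign_mat_sq)
lemma eR_sq: "eR * eR = 1\<^sub>m nr"
  unfolding eR_def by (rule sign_mat_sq)

lemma entry_rel:
  assumes "bsub [nc, nc, nr] [nc, nc, nr] (dif X * dif X) p q = 0\<^sub>m n m" "x < n" "y < m"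
  shows "bsub [nc, nc, nr] [nc, nc, nr] (dif X * dif X) p q $$ (x, y) = 0"
  using assms by simp

lemma rel_dv: "d * v = v * d + \<delta>2 * \<delta>1"
proof (rule eq_matI)
  fix x y assume "x < dim_row (v * d + \<delta>2 * \<delta>1)" "y < dim_col (v * d + \<delta>2 * \<delta>1)"
  then have xy: "x < nc" "y < nc" by simp_all
  have "bsub [nc, nc, nr] [nc, nc, nr] (dif X * dif X) (Suc 0) 0 = 0\<^sub>m nc nc" using DD by simp
  from entry_rel[OF this xy] xy show "(d * v) $$ (x, y) = (v * d + \<delta>2 * \<delta>1) $$ (x, y)"
    by (simp del: index_mult_mat add: algebra_simps)
qed simp_all

lemma rel_dd2: "d * \<delta>2 = \<delta>2 * r"
proof (rule eq_matI)
  fix x y assume "x < dim_row (\<delta>2 * r)" "y < dim_col (\<delta>2 * r)"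
  then have xy: "x < nc" "y < nr" by simp_all
  have "bsub [nc, nc, nr] [nc, nc, nr] (dif X * dif X) (Suc 0) 2 = 0\<^sub>m nc nr" using DD by simp
  from entry_rel[OF this xy] xy show "(d * \<delta>2) $$ (x, y) = (\<delta>2 * r) $$ (x, y)"
    by (simp del: index_mult_mat add: algebra_simps)
qed simp_all

lemma rel_rd1: "r * \<delta>1 = - (\<delta>1 * d)"
proof (rule eq_matI)
  fix x y assume "x < dim_row (- (\<delta>1 * d))" "y < dim_col (- (\<delta>1 * d))"
  then have xy: "x < nr" "y < nc" by simp_all
  have "bsub [nc, nc, nr] [nc, nc, nr] (dif X * dif X) 2 0 = 0\<^sub>m nr nc" using DD by simp
  from entry_rel[OF this xy] xy have "(\<delta>1 * d) $$ (x, y) + (r * \<delta>1) $$ (x, y) = 0"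
    by (simp del: index_mult_mat add: algebra_simps)
  then show "(r * \<delta>1) $$ (x, y) = (- (\<delta>1 * d)) $$ (x, y)" using xy
    by (simp del: index_mult_mat) (metis add.commute add_eq_0_iff)
qed simp_all


lemma uminus_uminus_mat'[simp]: "- (- A) = (A :: 'b::group_add mat)"
  by (rule eq_matI) auto
lemma add_uminus_self'[simp]: "A + - A = (0\<^sub>m (dim_row A) (dim_col A) :: 'b::group_add mat)"
  by (rule eq_matI) auto
lemma uminus_add_self'[simp]: "- A + A = (0\<^sub>m (dim_row A) (dim_col A) :: 'b::group_add mat)"
  by (rule eq_matI) auto
lemma uminus_add_distrib'[simp]: "dim_row A = dim_row B \<Longrightarrow> dim_col A = dim_col B \<Longrightarrow> - (A + B) = - A + - (B :: 'b::ab_group_add mat)"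
  by (rule eq_matI) auto
lemma zero_minus_mat'[simp]: "dim_row B = n \<Longrightarrow> dim_col B = m \<Longrightarrow> 0\<^sub>m n m - B = - (B :: 'b::group_add mat)"
  by (rule eq_matI) auto
lemma minus_self_mat'[simp]: "A - A = (0\<^sub>m (dim_row A) (dim_col A) :: 'b::group_add mat)"
  by (rule eq_matI) auto
lemma assoc_mult_mat'[simp]: "dim_col A = dim_row B \<Longrightarrow> dim_col B = dim_row C \<Longrightarrow> A * B * C = A * (B * (C :: 'b::comm_ring_1 mat))"
  by (rule assoc_mult_mat) (auto intro!: carrier_matI)

lemma add_mult_distrib_mat'[simp]: "dim_row A = dim_row B \<Longrightarrow> dim_col A = dim_col B \<Longrightarrow> dim_col B = dim_row C \<Longrightarrow>
  (A + B) * C = A * C + B * (C :: 'b::comm_ring_1 mat)"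
  by (rule add_mult_distrib_mat) (auto intro!: carrier_matI)
lemma mult_add_distrib_mat'[simp]: "dim_row B = dim_row C \<Longrightarrow> dim_col B = dim_col C \<Longrightarrow> dim_col A = dim_row B \<Longrightarrow>
  A * (B + C) = A * B + A * (C :: 'b::comm_ring_1 mat)"
  by (rule mult_add_distrib_mat) (auto intro!: carrier_matI)

lemma eC_d_Z: "dim_row Z = nc \<Longrightarrow> eC * (d * Z) = - (d * (eC * Z))"
proof -
  assume z: "dim_row Z = nc"
  have "eC * (d * Z) = (eC * d) * Z" by (rule assoc_mult_mat'[symmetric]) (use z in simp_all)
  also have "\<dots> = (- (d * eC)) * Z" by (simp only: eC_d)
  also have "\<dots> = - (d * (eC * Z))" using z by simp
  finally show ?thesis .
qed
lemma eR_r_Z: "dim_row Z = nr \<Longrightarrow> eR * (r * Z) = - (r * (eR * Z))"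
proof -
  assume z: "dim_row Z = nr"
  have "eR * (r * Z) = (eR * r) * Z" by (rule assoc_mult_mat'[symmetric]) (use z in simp_all)
  also have "\<dots> = (- (r * eR)) * Z" by (simp only: eR_r)
  also have "\<dots> = - (r * (eR * Z))" using z by simp
  finally show ?thesis .
qed
lemma eR_d1_Z: "dim_row Z = nc \<Longrightarrow> eR * (\<delta>1 * Z) = - (\<delta>1 * (eC * Z))"
proof -
  assume z: "dim_row Z = nc"
  have "eR * (\<delta>1 * Z) = (eR * \<delta>1) * Z" by (rule assoc_mult_mat'[symmetric]) (use z in simp_all)
  also have "\<dots> = (- (\<delta>1 * eC)) * Z" by (simp only: eR_d1)
  also have "\<dots> = - (\<delta>1 * (eC * Z))" using z by simp
  finally show ?thesis .
qed
lemma eC_v_Z: "dim_row Z = nc \<Longrightarrow> eC * (v * Z) = v * (eC * Z)"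
proof -
  assume z: "dim_row Z = nc"
  have "eC * (v * Z) = (eC * v) * Z" by (rule assoc_mult_mat'[symmetric]) (use z in simp_all)
  also have "\<dots> = (v * eC) * Z" by (simp only: eC_v)
  also have "\<dots> = v * (eC * Z)" using z by simp
  finally show ?thesis .
qed
lemma eC_d2_Z: "dim_row Z = nr \<Longrightarrow> eC * (\<delta>2 * Z) = \<delta>2 * (eR * Z)"
proof -
  assume z: "dim_row Z = nr"
  have "eC * (\<delta>2 * Z) = (eC * \<delta>2) * Z" by (rule assoc_mult_mat'[symmetric]) (use z in simp_all)
  also have "\<dots> = (\<delta>2 * eR) * Z" by (simp only: eC_d2)
  also have "\<dots> = \<delta>2 * (eR * Z)" using z by simp
  finally show ?thesis .
qed
lemma eC_sq_Z: "dim_row Z = nc \<Longrightarrow> eC * (eC * Z) = Z"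
proof -
  assume z: "dim_row Z = nc"
  have "eC * (eC * Z) = (eC * eC) * Z" by (rule assoc_mult_mat'[symmetric]) (use z in simp_all)
  also have "\<dots> = (1\<^sub>m nc) * Z" by (simp only: eC_sq)
  also have "\<dots> = Z" using z by simp
  finally show ?thesis .
qed
lemma eR_sq_Z: "dim_row Z = nr \<Longrightarrow> eR * (eR * Z) = Z"
proof -
  assume z: "dim_row Z = nr"
  have "eR * (eR * Z) = (eR * eR) * Z" by (rule assoc_mult_mat'[symmetric]) (use z in simp_all)
  also have "\<dots> = (1\<^sub>m nr) * Z" by (simp only: eR_sq)
  also have "\<dots> = Z" using z by simp
  finally show ?thesis .
qed
lemma rel_dv_Z: "dim_row Z = nc \<Longrightarrow> d * (v * Z) = v * (d * Z) + \<delta>2 * (\<delta>1 * Z)"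
proof -
  assume z: "dim_row Z = nc"
  have "d * (v * Z) = (d * v) * Z" by (rule assoc_mult_mat'[symmetric]) (use z in simp_all)
  also have "\<dots> = (v * d + \<delta>2 * \<delta>1) * Z" by (simp only: rel_dv)
  also have "\<dots> = v * (d * Z) + \<delta>2 * (\<delta>1 * Z)" using z by simp
  finally show ?thesis .
qed
lemma rel_dd2_Z: "dim_row Z = nr \<Longrightarrow> d * (\<delta>2 * Z) = \<delta>2 * (r * Z)"
proof -
  assume z: "dim_row Z = nr"
  have "d * (\<delta>2 * Z) = (d * \<delta>2) * Z" by (rule assoc_mult_mat'[symmetric]) (use z in simp_all)
  also have "\<dots> = (\<delta>2 * r) * Z" by (simp only: rel_dd2)
  also have "\<dots> = \<delta>2 * (r * Z)" using z by simp
  finally show ?thesis .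
qed
lemma rel_rd1_Z: "dim_row Z = nc \<Longrightarrow> r * (\<delta>1 * Z) = - (\<delta>1 * (d * Z))"
proof -
  assume z: "dim_row Z = nc"
  have "r * (\<delta>1 * Z) = (r * \<delta>1) * Z" by (rule assoc_mult_mat'[symmetric]) (use z in simp_all)
  also have "\<dots> = (- (\<delta>1 * d)) * Z" by (simp only: rel_rd1)
  also have "\<dots> = - (\<delta>1 * (d * Z))" using z by simp
  finally show ?thesis .
qed

lemmas rels[simp] = eC_d eC_d_Z eR_r eR_r_Z eR_d1 eR_d1_Z eC_v eC_v_Z eC_d2 eC_d2_Z eC_sq eC_sq_Z eR_sq eR_sq_Z rel_dv rel_dv_Z rel_dd2 rel_dd2_Z rel_rd1 rel_rd1_Z

lemma X1: "dif X * F0 = F0 * dif S"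
  apply (rule bsub_eq_XS)
  apply simp_all
  done

lemma X2: "dif X * F1 + sign_mat (degs X) * F2 = F1 * dif S"
  apply (rule bsub_eq_XS)
  apply simp_all
  done

lemma X3: "dif X * F2 = F2 * dif S"
  apply (rule bsub_eq_XS)
  apply simp_all
  done

lemma C1: "chi X * F0 = F0 * chi S"
  apply (rule bsub_eq_XS)
  apply simp_all
  done

lemma C2: "sign_mat (degs X) * F0 + chi X * F1 = F1 * chi S"
  apply (rule bsub_eq_XS)
  apply simp_all
  done

lemma C3: "chi X * F2 = F2 * chi S"
  apply (rule bsub_eq_XS)
  apply simp_all
  done

lemma Y1: "dif S * G0 = G0 * dif X"
  apply (rule bsub_eq_SX)
  apply simp_all
  done

lemma Y2: "dif S * G1 = G1 * dif X"
  apply (rule bsub_eq_SX)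
  apply simp_all
  done

lemma Y3: "dif S * G2 = G1 * sign_mat (degs X) + G2 * dif X"
  apply (rule bsub_eq_SX)
  apply simp_all
  done

lemma D1: "chi S * G0 = G0 * chi X + G1 * sign_mat (degs X)"
  apply (rule bsub_eq_SX)
  apply simp_all
  done

lemma D2: "chi S * G1 = G1 * chi X"
  apply (rule bsub_eq_SX)
  apply simp_all
  done

lemma D3: "chi S * G2 = G2 * chi X"
  apply (rule bsub_eq_SX)
  apply simp_all
  done

lemma GF: "G0 * F0 + G1 * F1 + G2 * F2 = 1\<^sub>m M"
  apply (rule bsub_eq_SS)
  apply simp_all
  done

lemma KC1: "chi X * K20 + (K20 * chi X + K21 * sign_mat (degs X)) = 0\<^sub>m N N"
  apply (rule bsub_eq_XX)
  apply simp_all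
  done

lemma KC2: "chi X * K21 + K21 * chi X = 0\<^sub>m N N"
  apply (rule bsub_eq_XX)
  apply simp_all
  done

lemma H1: "F0 * G0 = 1\<^sub>m N"
  apply (rule bsub_eq_XX)
  apply simp_all
  done

lemma H2: "F0 * G1 = 0\<^sub>m N N"
  apply (rule bsub_eq_XX)
  apply simp_all
  done

lemma H3: "F0 * G2 = 0\<^sub>m N N"
  apply (rule bsub_eq_XX)
  apply simp_all
  done

lemma H4: "sign_mat (degs X) * K20 = F1 * G0"
  apply (rule bsub_eq_XX)
  apply simp_all
  done

lemma H5: "sign_mat (degs X) * K21 = F1 * G1 - 1\<^sub>m N"
  apply (rule bsub_eq_XX)
  apply simp_all
  done

lemma H6: "F1 * G2 = 0\<^sub>m N N"
  apply (rule bsub_eq_XX)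
  apply simp_all
  done

lemma H7: "dif X * K20 + K20 * dif X = F2 * G0"
  apply (rule bsub_eq_XX)
  apply simp_all
  done

lemma H8: "dif X * K21 + K21 * dif X = F2 * G1"
  apply (rule bsub_eq_XX)
  apply simp_all
  done

lemma H9: "K21 * sign_mat (degs X) = F2 * G2 - 1\<^sub>m N"
  apply (rule bsub_eq_XX)
  apply simp_all
  done

end


lemma graded_map_cong:
  assumes "graded_map s t k A" "length s' = length s" "length t' = length t"
    "\<And>i j. i < length t \<Longrightarrow> j < length s \<Longrightarrow> t ! i = s ! j + k \<Longrightarrow> t' ! i = s' ! j + k'"
  shows "graded_map s' t' k' A"
  using assms unfolding graded_map_def by auto

lemma graded_zero'[simp]: "n = length t \<Longrightarrow> m = length s \<Longrightarrow> graded_map s t k (0\<^sub>m n m)"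
  by (auto simp: graded_map_def)

lemma graded_one'[simp]: "length s = n \<Longrightarrow> length t = n \<Longrightarrow> (\<forall>x<n. t ! x = s ! x + k) \<Longrightarrow> graded_map s t k (1\<^sub>m n)"
  by (auto simp: graded_map_def)

lemma graded_sign: "length s = length ds \<Longrightarrow> length t = length ds \<Longrightarrow> (\<forall>x<length ds. t ! x = s ! x + k) \<Longrightarrow> graded_map s t k (sign_mat ds)"
  by (auto simp: graded_map_def sign_mat_def mat_diag_def)

context Sc begin

lemma graded_eC[simp]: "length s = nc \<Longrightarrow> length t = nc \<Longrightarrow> (\<forall>x<nc. t ! x = s ! x + k) \<Longrightarrow> graded_map s t k eC"
  unfolding eC_def by (rule graded_sign) auto
lemma graded_eR[simp]: "length s = nr \<Longrightarrow> length t = nr \<Longrightarrow> (\<forall>x<nr. t ! x = s ! x + k) \<Longrightarrow> graded_map s t k eR"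
  unfolding eR_def by (rule graded_sign) auto

lemma gv1[simp]: "graded_map (shift_degs 2 dc) dc 0 v"
  by (rule graded_map_cong[OF g_v]) (auto simp: shift_degs_def)
lemma gv2[simp]: "graded_map (shift_degs 1 dc) (shift_degs (-1) dc) 0 v"
  by (rule graded_map_cong[OF g_v]) (auto simp: shift_degs_def)
lemma gd2a[simp]: "graded_map (shift_degs 2 dr) dc 0 \<delta>2"
  by (rule graded_map_cong[OF g_d2]) (auto simp: shift_degs_def)
lemma gd2b[simp]: "graded_map (shift_degs 1 dr) (shift_degs (-1) dc) 0 \<delta>2"
  by (rule graded_map_cong[OF g_d2]) (auto simp: shift_degs_def)
lemma gd1[simp]: "graded_map (shift_degs (-1) dc) dr (-2) \<delta>1"
  by (rule graded_map_cong[OF g_d1]) (auto simp: shift_degs_def)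
lemma gv1'[simp]: "graded_map (map (\<lambda>n. n - 2) dc) dc 0 v"
  using gv1 by (simp add: shift_degs_def)
lemma gv2'[simp]: "graded_map (map (\<lambda>n. n - 1) dc) (map (\<lambda>n. n + 1) dc) 0 v"
  using gv2 by (simp add: shift_degs_def)
lemma gd2a'[simp]: "graded_map (map (\<lambda>n. n - 2) dr) dc 0 \<delta>2"
  using gd2a by (simp add: shift_degs_def)
lemma gd2b'[simp]: "graded_map (map (\<lambda>n. n - 1) dr) (map (\<lambda>n. n + 1) dc) 0 \<delta>2"
  using gd2b by (simp add: shift_degs_def)
lemma gd1'[simp]: "graded_map (map (\<lambda>n. n + 1) dc) dr (-2) \<delta>1"
  using gd1 by (simp add: shift_degs_def)
declare graded_uminus[simp]

lemma gd1e[simp]: "graded_map dc dr (-1) (- (\<delta>1 * eC))"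
proof -
  have "graded_map dc dc 0 eC" by (rule graded_eC) auto
  from graded_mult[OF this g_d1] show ?thesis by (intro graded_uminus) simp
qed

lemma graded_SX:
  assumes "dim_row A = nc + (nr + (nc + (nr + nr)))" "dim_col A = nc + (nc + nr)"
  "graded_map (dc) (shift_degs 2 dc) k (bsub [nc, nr, nc, nr, nr] [nc, nc, nr] A 0 0)" "graded_map (shift_degs (-1) dc) (shift_degs 2 dc) k (bsub [nc, nr, nc, nr, nr] [nc, nc, nr] A 0 (Suc 0))" "graded_map (dr) (shift_degs 2 dc) k (bsub [nc, nr, nc, nr, nr] [nc, nc, nr] A 0 2)" "graded_map (dc) (shift_degs 2 dr) k (bsub [nc, nr, nc, nr, nr] [nc, nc, nr] A (Suc 0) 0)" "graded_map (shift_degs (-1) dc) (shift_degs 2 dr) k (bsub [nc, nr, nc, nr, nr] [nc, nc, nr] A (Suc 0) (Suc 0))" "graded_map (dr) (shift_degs 2 dr) k (bsub [nc, nr, nc, nr, nr] [nc, nc, nr] A (Suc 0) 2)" "graded_map (dc) (shift_degs 1 dc) k (bsub [nc, nr, nc, nr, nr] [nc, nc, nr] A 2 0)" "graded_map (shift_degs (-1) dc) (shift_degs 1 dc) k (bsub [nc, nr, nc, nr, nr] [nc, nc, nr] A 2 (Suc 0))" "graded_map (dr) (shift_degs 1 dc) k (bsub [nc, nr, nc, nr, nr] [nc, nc, nr] A 2 2)" "graded_map (dc) (shift_degs 1 dr) k (bsub [nc, nr, nc, nr, nr] [nc, nc, nr] A 3 0)" "graded_map (shift_degs (-1) dc) (shift_degs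 1 dr) k (bsub [nc, nr, nc, nr, nr] [nc, nc, nr] A 3 (Suc 0))" "graded_map (dr) (shift_degs 1 dr) k (bsub [nc, nr, nc, nr, nr] [nc, nc, nr] A 3 2)" "graded_map (dc) (dr) k (bsub [nc, nr, nc, nr, nr] [nc, nc, nr] A 4 0)" "graded_map (shift_degs (-1) dc) (dr) k (bsub [nc, nr, nc, nr, nr] [nc, nc, nr] A 4 (Suc 0))" "graded_map (dr) (dr) k (bsub [nc, nr, nc, nr, nr] [nc, nc, nr] A 4 2)"
  shows "graded_map (degs X) (degs S) k A"
proof -
  have "graded_map (concat [dc, shift_degs (-1) dc, dr]) (concat [shift_degs 2 dc, shift_degs 2 dr, shift_degs 1 dc, shift_degs 1 dr, dr]) k A"
  proof (rule graded_subI)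
    fix i j assume "i < length [shift_degs 2 dc, shift_degs 2 dr, shift_degs 1 dc, shift_degs 1 dr, dr]" "j < length [dc, shift_degs (-1) dc, dr]"
    then show "graded_map ([dc, shift_degs (-1) dc, dr] ! j) ([shift_degs 2 dc, shift_degs 2 dr, shift_degs 1 dc, shift_degs 1 dr, dr] ! i) k (bsub (map length [shift_degs 2 dc, shift_degs 2 dr, shift_degs 1 dc, shift_degs 1 dr, dr]) (map length [dc, shift_degs (-1) dc, dr]) A i j)"
      using assms(3-) by (auto simp: less_Suc_eq numeral_eq_Suc)
  qed (use assms in \<open>auto intro!: carrier_matI\<close>)
  then show ?thesis by (simp only: degs_S degs_X)
qed

lemma graded_XS:
  assumes "dim_row A = nc + (nc + nr)" "dim_col A = nc + (nr + (nc + (nr + nr)))"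
  "graded_map (shift_degs 2 dc) (dc) k (bsub [nc, nc, nr] [nc, nr, nc, nr, nr] A 0 0)" "graded_map (shift_degs 2 dr) (dc) k (bsub [nc, nc, nr] [nc, nr, nc, nr, nr] A 0 (Suc 0))" "graded_map (shift_degs 1 dc) (dc) k (bsub [nc, nc, nr] [nc, nr, nc, nr, nr] A 0 2)" "graded_map (shift_degs 1 dr) (dc) k (bsub [nc, nc, nr] [nc, nr, nc, nr, nr] A 0 3)" "graded_map (dr) (dc) k (bsub [nc, nc, nr] [nc, nr, nc, nr, nr] A 0 4)" "graded_map (shift_degs 2 dc) (shift_degs (-1) dc) k (bsub [nc, nc, nr] [nc, nr, nc, nr, nr] A (Suc 0) 0)" "graded_map (shift_degs 2 dr) (shift_degs (-1) dc) k (bsub [nc, nc, nr] [nc, nr, nc, nr, nr] A (Suc 0) (Suc 0))" "graded_map (shift_degs 1 dc) (shift_degs (-1) dc) k (bsub [nc, nc, nr] [nc, nr, nc, nr, nr] A (Suc 0) 2)" "graded_map (shift_degs 1 dr) (shift_degs (-1) dc) k (bsub [nc, nc, nr] [nc, nr, nc, nr, nr] A (Suc 0) 3)" "graded_map (dr) (shift_degs (-1) dc) k (bsub [nc, nc, nr] [nc, nr, nc, nr, nr] A (Suc 0) 4)" "graded_map (shift_degs 2 dc) (dr) k (bsub [nc, nc, nr] [nc, nr, nc, nr, nr] A 2 0)" "graded_map (shift_degs 2 dr) (dr) k (bsub [nc, nc, nr] [nc, nr, nc, nr, nr] A 2 (Suc 0))" "graded_map (shift_degs 1 dc) (dr) k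 (bsub [nc, nc, nr] [nc, nr, nc, nr, nr] A 2 2)" "graded_map (shift_degs 1 dr) (dr) k (bsub [nc, nc, nr] [nc, nr, nc, nr, nr] A 2 3)" "graded_map (dr) (dr) k (bsub [nc, nc, nr] [nc, nr, nc, nr, nr] A 2 4)"
  shows "graded_map (degs S) (degs X) k A"
proof -
  have "graded_map (concat [shift_degs 2 dc, shift_degs 2 dr, shift_degs 1 dc, shift_degs 1 dr, dr]) (concat [dc, shift_degs (-1) dc, dr]) k A"
  proof (rule graded_subI)
    fix i j assume "i < length [dc, shift_degs (-1) dc, dr]" "j < length [shift_degs 2 dc, shift_degs 2 dr, shift_degs 1 dc, shift_degs 1 dr, dr]"
    then show "graded_map ([shift_degs 2 dc, shift_degs 2 dr, shift_degs 1 dc, shift_degs 1 dr, dr] ! j) ([dc, shift_degs (-1) dc, dr] ! i) k (bsub (map length [dc, shift_degs (-1) dc, dr]) (map length [shift_degs 2 dc, shift_degs 2 dr, shift_degs 1 dc, shift_degs 1 dr, dr]) A i j)"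
      using assms(3-) by (auto simp: less_Suc_eq numeral_eq_Suc)
  qed (use assms in \<open>auto intro!: carrier_matI\<close>)
  then show ?thesis by (simp only: degs_X degs_S)
qed

lemma graded_XX:
  assumes "dim_row A = nc + (nc + nr)" "dim_col A = nc + (nc + nr)"
  "graded_map (dc) (dc) k (bsub [nc, nc, nr] [nc, nc, nr] A 0 0)" "graded_map (shift_degs (-1) dc) (dc) k (bsub [nc, nc, nr] [nc, nc, nr] A 0 (Suc 0))" "graded_map (dr) (dc) k (bsub [nc, nc, nr] [nc, nc, nr] A 0 2)" "graded_map (dc) (shift_degs (-1) dc) k (bsub [nc, nc, nr] [nc, nc, nr] A (Suc 0) 0)" "graded_map (shift_degs (-1) dc) (shift_degs (-1) dc) k (bsub [nc, nc, nr] [nc, nc, nr] A (Suc 0) (Suc 0))" "graded_map (dr) (shift_degs (-1) dc) k (bsub [nc, nc, nr] [nc, nc, nr] A (Suc 0) 2)" "graded_map (dc) (dr) k (bsub [nc, nc, nr] [nc, nc, nr] A 2 0)" "graded_map (shift_degs (-1) dc) (dr) k (bsub [nc, nc, nr] [nc, nc, nr] A 2 (Suc 0))" "graded_map (dr) (dr) k (bsub [nc, nc, nr] [nc, nc, nr] A 2 2)"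
  shows "graded_map (degs X) (degs X) k A"
proof -
  have "graded_map (concat [dc, shift_degs (-1) dc, dr]) (concat [dc, shift_degs (-1) dc, dr]) k A"
  proof (rule graded_subI)
    fix i j assume "i < length [dc, shift_degs (-1) dc, dr]" "j < length [dc, shift_degs (-1) dc, dr]"
    then show "graded_map ([dc, shift_degs (-1) dc, dr] ! j) ([dc, shift_degs (-1) dc, dr] ! i) k (bsub (map length [dc, shift_degs (-1) dc, dr]) (map length [dc, shift_degs (-1) dc, dr]) A i j)"
      using assms(3-) by (auto simp: less_Suc_eq numeral_eq_Suc)
  qed (use assms in \<open>auto intro!: carrier_matI\<close>)
  then show ?thesis by (simp only: degs_X degs_X)
qed


lemma grF0: "graded_map (degs S) (degs X) 2 F0"
  by (rule graded_XS) (simp_all add: shift_degs_def)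
lemma grF1: "graded_map (degs S) (degs X) 1 F1"
  by (rule graded_XS) (simp_all add: shift_degs_def)
lemma grF2: "graded_map (degs S) (degs X) 0 F2"
  by (rule graded_XS) (simp_all add: shift_degs_def)
lemma grG0: "graded_map (degs X) (degs S) (-2) G0"
  by (rule graded_SX) (simp_all add: shift_degs_def)
lemma grG1: "graded_map (degs X) (degs S) (-1) G1"
  by (rule graded_SX) (simp_all add: shift_degs_def)
lemma grG2: "graded_map (degs X) (degs S) 0 G2"
  by (rule graded_SX) (simp_all add: shift_degs_def)
lemma grK20: "graded_map (degs X) (degs X) (-1) K20"
  by (rule graded_XX) (simp_all add: shift_degs_def)
lemma grK21: "graded_map (degs X) (degs X) 0 K21"
  by (rule graded_XX) (simp_all add: shift_degs_def)

lemma cases3: "(i::nat) < 3 \<Longrightarrow> P 0 \<Longrightarrow> P (Suc 0) \<Longrightarrow> P 2 \<Longrightarrow> P i"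
  by (auto simp: less_Suc_eq numeral_eq_Suc)
lemma cases1: "(i::nat) < Suc 0 \<Longrightarrow> P 0 \<Longrightarrow> P i"
  by auto

lemma less3_disj: "(i::nat) < 3 \<Longrightarrow> i = 0 \<or> i = Suc 0 \<or> i = 2"
  by (auto simp: less_Suc_eq numeral_eq_Suc)

lemma l3: "length [-2, -1, 0::int] = 3" by simp
lemma l1: "length [0::int] = Suc 0" by simp

lemma grF: "graded_map (degs S) (degs T) 0 F"
proof -
  have "graded_map (tdegs (degs S) [0]) (tdegs (degs X) [-2, -1, 0]) 0 F"
  proof (rule graded_extI, unfold l3 l1)
    show "F \<in> carrier_mat (length (degs X) * 3) (length (degs S) * Suc 0)" by (auto intro!: carrier_matI)
    fix i j :: nat assume i: "i < 3" and j: "j < Suc 0"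
    show "graded_map (degs S) (degs X) (0 + [0] ! j - [- 2, - 1, 0] ! i) (xt 3 (Suc 0) (length (degs X)) (length (degs S)) F i j)"
      using j apply (rule cases1)
      using i apply (rule cases3)
      using grF0 grF1 grF2 by simp_all
  qed
  then show ?thesis by (simp add: degs_T tdegs_0)
qed

lemma grG: "graded_map (degs T) (degs S) 0 G"
proof -
  have "graded_map (tdegs (degs X) [-2, -1, 0]) (tdegs (degs S) [0]) 0 G"
  proof (rule graded_extI, unfold l3 l1)
    show "G \<in> carrier_mat (length (degs S) * Suc 0) (length (degs X) * 3)" by (auto intro!: carrier_matI)
    fix i j :: nat assume i: "i < Suc 0" and j: "j < 3"
    show "graded_map (degs X) (degs S) (0 + [- 2, - 1, 0] ! j - [0] ! i) (xt (Suc 0) 3 (length (degs S)) (length (degs X)) G i j)"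
      using i apply (rule cases1)
      using j apply (rule cases3)
      using grG0 grG1 grG2 by simp_all
  qed
  then show ?thesis by (simp add: degs_T tdegs_0)
qed

lemma grK: "graded_map (degs T) (degs T) 1 K"
proof -
  have "graded_map (tdegs (degs X) [-2, -1, 0]) (tdegs (degs X) [-2, -1, 0]) 1 K"
  proof (rule graded_extI, unfold l3 l1)
    show "K \<in> carrier_mat (length (degs X) * 3) (length (degs X) * 3)" by (auto intro!: carrier_matI)
    fix i j :: nat assume i: "i < 3" and j: "j < 3"
    show "graded_map (degs X) (degs X) (1 + [- 2, - 1, 0] ! j - [- 2, - 1, 0] ! i) (xt 3 3 (length (degs X)) (length (degs X)) K i j)"
      using less3_disj[OF i] less3_disj[OF j] grK20 grK21 by auto
  qed
  then show ?thesis by (simp add: degs_T)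
qed

lemma TF1: "dif T * F = F * dif S"
  apply (rule xt_eq_31)
  apply simp_all
  apply (rule X1)
  apply (rule X2)
  apply (rule X3)
  done

lemma TF2: "chi T * F = F * chi S"
  apply (rule xt_eq_31)
  apply simp_all
  apply (rule C1)
  apply (rule C2)
  apply (rule C3)
  done

lemma TG1: "dif S * G = G * dif T"
  apply (rule xt_eq_13)
  apply simp_all
  apply (rule Y1)
  apply (rule Y2)
  apply (rule Y3)
  done

lemma TG2: "chi S * G = G * chi T"
  apply (rule xt_eq_13)
  apply simp_all
  apply (rule D1)
  apply (rule D2)
  apply (rule D3)
  done

lemma TGF: "G * F = 1\<^sub>m M"
proof -
  have "xt (Suc 0) (Suc 0) M M (G * F) 0 0 = G0 * F0 + G1 * F1 + G2 * F2"
    by (simp del: xt11)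
  then show ?thesis using GF by simp
qed

lemma TKC: "chi T * K + K * chi T = 0\<^sub>m (N * 3) (N * 3)"
  apply (rule xt_eq_33)
  apply (simp_all add: xt_add)
  apply (rule KC1)
  apply (rule KC2)
  done

lemma TKD: "dif T * K + K * dif T = F * G - 1\<^sub>m (N * 3)"
  apply (rule xt_eq_33)
  apply (simp_all add: xt_add xt_minus H1 H2 H3 H4 H5 H6 H7 H8 H9)
  done

end

theorem proposition2p6:
  fixes dc dr :: "int list" and d v \<delta>1 \<delta>2 r :: "'a::comm_ring_1 mat"
  assumes "is_S_complex dc dr d v \<delta>1 \<delta>2 r"
  shows "S_htpy_equiv (neg_susp dc dr d v \<delta>1 \<delta>2 r)
                      (tensor_cx (S_tot dc dr d v \<delta>1 \<delta>2 r) O_minus1)"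
proof -
  interpret Sc dc dr d v \<delta>1 \<delta>2 r by unfold_locales (rule assms)
  have lT: "length (degs T) = N * 3" by (simp add: degs_T)
  show ?thesis unfolding S_htpy_equiv_def
  proof (intro exI conjI)
    show "S_morphism S T F" unfolding S_morphism_def using grF TF1 TF2 by simp
    show "S_morphism T S G" unfolding S_morphism_def using grG TG1 TG2 by simp
    show "S_homotopy S S (G * F) (1\<^sub>m (length (degs S))) (0\<^sub>m M M)"
      unfolding S_homotopy_def using TGF by simp
    show "S_homotopy T T (F * G) (1\<^sub>m (length (degs T))) K"
      unfolding S_homotopy_def lT using grK TKC TKD lT by simp
  qed
qed



end
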